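(* For each $N\ge1$ let $\eta^N(t)$ be an irreducible continuous-time Markov chain on a finite set $\Omega_N$ with jump rates $R_N(\eta,\xi)$ and unique stationary distribution $\nu_N$; let $A_N\subset\Omega_N$ with $\lim_N\nu_N(A_N)=0$ and $H_N=\inf\{t>0:\eta^N(t)\in A_N\}$. Assume $T^{\rm mix}_N\ll r_N(A_N^c,A_N)^{-1}$, and let $\theta_N=\inf\{t>0:\mathbb P_{\nu_N}[H_N>t]<e^{-1}\}$. Then, under $\mathbb P_{\nu_N}$, $H_N/\theta_N$ converges in distribution to a mean one exponential random variable.
   Context: $T^{\rm mix}_N=\inf\{t>0:\max_{\eta}\|P_t(\eta,\cdot)-\nu_N\|_{\rm TV}\le1/4\}$ where $P_t(\eta,\xi)=\mathbb P_\eta[\eta^N(t)=\xi]$. $R_N(\xi,A_N)=\sum_{\zeta\in A_N}R_N(\xi,\zeta)$, $r_N(A_N^c,A_N)=\frac1{\nu_N(A_N^c)}\sum_{\xi\in A_N^c}\nu_N(\xi)R_N(\xi,A_N)$. $a_N\ll b_N$ means $a_N/b_N\to0$. $\mathbb P_{\nu_N}$ is the law of the chain started from $\nu_N$. *)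

theory Defs
  imports "HOL-Analysis.Analysis"
begin

text \<open>Finite-state continuous-time Markov chains, described analytically through
  their jump rates.  States live in a type 'a; the state space is a finite set Om.\<close>

definition valid_rates :: "'a set \<Rightarrow> ('a \<Rightarrow> 'a \<Rightarrow> real) \<Rightarrow> bool" where
  "valid_rates Om R \<longleftrightarrow> finite Om \<and> Om \<noteq> {} \<and>
     (\<forall>x\<in>Om. \<forall>y\<in>Om. x \<noteq> y \<longrightarrow> 0 \<le> R x y)"

definition jump_rel :: "'a set \<Rightarrow> ('a \<Rightarrow> 'a \<Rightarrow> real) \<Rightarrow> ('a \<times> 'a) set" where
  "jump_rel Om R = {(x, y). x \<in> Om \<and> y \<in> Om \<and> x \<noteq> y \<and> 0 < R x y}"

definition irreducible_chain :: "'a set \<Rightarrow> ('a \<Rightarrow> 'a \<Rightarrow> real) \<Rightarrow> bool" where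
  "irreducible_chain Om R \<longleftrightarrow> (\<forall>x\<in>Om. \<forall>y\<in>Om. (x, y) \<in> (jump_rel Om R)\<^sup>*)"

definition generator :: "'a set \<Rightarrow> ('a \<Rightarrow> 'a \<Rightarrow> real) \<Rightarrow> 'a \<Rightarrow> 'a \<Rightarrow> real" where
  "generator Om R x y = (if x = y then - (\<Sum>z\<in>Om - {x}. R x z) else R x y)"

fun mpow :: "'a set \<Rightarrow> ('a \<Rightarrow> 'a \<Rightarrow> real) \<Rightarrow> nat \<Rightarrow> 'a \<Rightarrow> 'a \<Rightarrow> real" where
  "mpow S Q 0 = (\<lambda>x y. if x = y then 1 else 0)"
| "mpow S Q (Suc k) = (\<lambda>x y. \<Sum>z\<in>S. Q x z * mpow S Q k z y)"

definition mexp :: "'a set \<Rightarrow> ('a \<Rightarrow> 'a \<Rightarrow> real) \<Rightarrow> real \<Rightarrow> 'a \<Rightarrow> 'a \<Rightarrow> real" where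
  "mexp S Q t x y = (\<Sum>k. t ^ k / fact k * mpow S Q k x y)"

text \<open>Transition probabilities P_t(x,y) = P_x[eta(t) = y].\<close>
definition trans_prob :: "'a set \<Rightarrow> ('a \<Rightarrow> 'a \<Rightarrow> real) \<Rightarrow> real \<Rightarrow> 'a \<Rightarrow> 'a \<Rightarrow> real" where
  "trans_prob Om R t = mexp Om (generator Om R) t"

definition stationary :: "'a set \<Rightarrow> ('a \<Rightarrow> 'a \<Rightarrow> real) \<Rightarrow> ('a \<Rightarrow> real) \<Rightarrow> bool" where
  "stationary Om R nu \<longleftrightarrow> (\<forall>x\<in>Om. 0 \<le> nu x) \<and> (\<Sum>x\<in>Om. nu x) = 1 \<and>
     (\<forall>y\<in>Om. (\<Sum>x\<in>Om. nu x * generator Om R x y) = 0)"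

definition tv_dist :: "'a set \<Rightarrow> ('a \<Rightarrow> real) \<Rightarrow> ('a \<Rightarrow> real) \<Rightarrow> real" where
  "tv_dist Om p q = (\<Sum>x\<in>Om. \<bar>p x - q x\<bar>) / 2"

definition mixing_time :: "'a set \<Rightarrow> ('a \<Rightarrow> 'a \<Rightarrow> real) \<Rightarrow> ('a \<Rightarrow> real) \<Rightarrow> real" where
  "mixing_time Om R nu =
     Inf {t. 0 < t \<and> (\<forall>x\<in>Om. tv_dist Om (trans_prob Om R t x) nu \<le> 1 / 4)}"

definition cap_rate :: "'a set \<Rightarrow> ('a \<Rightarrow> 'a \<Rightarrow> real) \<Rightarrow> ('a \<Rightarrow> real) \<Rightarrow> 'a set \<Rightarrow> real" where
  "cap_rate Om R nu A =
     (\<Sum>x\<in>Om - A. nu x * (\<Sum>y\<in>A. R x y)) / (\<Sum>x\<in>Om - A. nu x)"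

text \<open>P_nu[H_A > t], H_A = inf{s>0. eta(s) \<in> A}: the chain started in A has H_A = 0;
  started at x outside A, P_x[H_A > t] = sum_y exp(t Q_{A^c})(x,y), where Q_{A^c} is
  the generator restricted to A^c (the chain killed upon entering A).\<close>
definition survival :: "'a set \<Rightarrow> ('a \<Rightarrow> 'a \<Rightarrow> real) \<Rightarrow> ('a \<Rightarrow> real) \<Rightarrow> 'a set \<Rightarrow> real \<Rightarrow> real" where
  "survival Om R nu A t =
     (\<Sum>x\<in>Om - A. nu x * (\<Sum>y\<in>Om - A. mexp (Om - A) (generator Om R) t x y))"

definition theta :: "'a set \<Rightarrow> ('a \<Rightarrow> 'a \<Rightarrow> real) \<Rightarrow> ('a \<Rightarrow> real) \<Rightarrow> 'a set \<Rightarrow> real" where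
  "theta Om R nu A = Inf {t. 0 < t \<and> survival Om R nu A t < exp (-1)}"

end

theory Submission
  imports Defs
begin


lemma mpow_bound:
  assumes fin: "finite S" and M: "\<And>a b. a \<in> S \<Longrightarrow> b \<in> S \<Longrightarrow> \<bar>Q a b\<bar> \<le> M"
  shows "x \<in> S \<Longrightarrow> \<bar>mpow S Q k x y\<bar> \<le> (real (card S) * M) ^ k"
proof (induction k arbitrary: x)
  case 0 then show ?case by simp
next
  case (Suc k)
  have M0: "0 \<le> M" using M[OF Suc.prems Suc.prems] by linarith
  have "\<bar>mpow S Q (Suc k) x y\<bar> \<le> (\<Sum>z\<in>S. \<bar>Q x z\<bar> * \<bar>mpow S Q k z y\<bar>)"
    by (simp add: abs_mult[symmetric] sum_abs)
  also have "\<dots> \<le> (\<Sum>z\<in>S. M * (real (card S) * M) ^ k)"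
    by (intro sum_mono mult_mono) (use Suc M M0 in auto)
  also have "\<dots> = (real (card S) * M) ^ Suc k" by simp
  finally show ?case .
qed

lemma mpow_summable:
  assumes fin: "finite S" and x: "x \<in> S"
  shows "summable (\<lambda>k. \<bar>t ^ k / fact k * mpow S Q k x y\<bar>)"
proof -
  define M where "M = (\<Sum>a\<in>S. \<Sum>b\<in>S. \<bar>Q a b\<bar>)"
  have M: "\<bar>Q a b\<bar> \<le> M" if "a \<in> S" "b \<in> S" for a b
  proof -
    have "\<bar>Q a b\<bar> \<le> (\<Sum>b\<in>S. \<bar>Q a b\<bar>)" by (rule member_le_sum) (use that fin in auto)
    also have "\<dots> \<le> M" unfolding M_def by (rule member_le_sum[of a S "\<lambda>a. \<Sum>b\<in>S. \<bar>Q a b\<bar>"]) (use that fin in \<open>auto intro: sum_nonneg\<close>)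
    finally show ?thesis .
  qed
  define C where "C = real (card S) * M"
  have "summable (\<lambda>k. inverse (fact k) * (\<bar>t\<bar> * C) ^ k)" by (rule summable_exp)
  then show ?thesis
  proof (rule summable_comparison_test'[where N=0])
    fix k :: nat
    have "norm \<bar>t ^ k / fact k * mpow S Q k x y\<bar> = \<bar>t\<bar>^k / fact k * \<bar>mpow S Q k x y\<bar>"
      by (simp add: abs_mult power_abs)
    also have "\<dots> \<le> \<bar>t\<bar>^k / fact k * C ^ k"
      by (intro mult_left_mono) (use mpow_bound[OF fin M x] C_def in auto)
    also have "\<dots> = inverse (fact k) * (\<bar>t\<bar> * C) ^ k" by (simp add: power_mult_distrib field_simps)
    finally show "norm \<bar>t ^ k / fact k * mpow S Q k x y\<bar> \<le> inverse (fact k) * (\<bar>t\<bar> * C) ^ k" .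
  qed
qed

lemma mpow_summable':
  assumes fin: "finite S" and x: "x \<in> S"
  shows "summable (\<lambda>k. t ^ k / fact k * mpow S Q k x y)"
  by (rule summable_rabs_cancel[OF mpow_summable[OF assms]])

lemma mpow_add:
  "x \<in> S \<Longrightarrow> finite S \<Longrightarrow> mpow S Q (i + j) x y = (\<Sum>z\<in>S. mpow S Q i x z * mpow S Q j z y)"
proof (induction i arbitrary: x)
  case 0
  have "(\<Sum>z\<in>S. (if x = z then 1 else 0) * mpow S Q j z y) = (\<Sum>z\<in>S. if x = z then mpow S Q j z y else 0)"
    by (intro sum.cong) auto
  then show ?case using 0 by simp
next
  case (Suc i)
  have "mpow S Q (Suc i + j) x y = (\<Sum>w\<in>S. Q x w * (\<Sum>z\<in>S. mpow S Q i w z * mpow S Q j z y))"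
    using Suc by simp
  also have "\<dots> = (\<Sum>z\<in>S. (\<Sum>w\<in>S. Q x w * mpow S Q i w z) * mpow S Q j z y)"
    by (simp only: sum_distrib_left sum_distrib_right mult.assoc) (rule sum.swap)
  finally show ?case by simp
qed

lemma binom_fact_sum:
  fixes s t :: real
  shows "(\<Sum>i\<le>n. s ^ i / fact i * (t ^ (n - i) / fact (n - i))) = (s + t) ^ n / fact n"
proof -
  have "(s + t) ^ n / fact n = (\<Sum>i\<le>n. of_nat (n choose i) * s ^ i * t ^ (n - i)) / fact n"
    by (simp add: binomial_ring)
  also have "\<dots> = (\<Sum>i\<le>n. of_nat (n choose i) * s ^ i * t ^ (n - i) / fact n)"
    by (simp add: sum_divide_distrib)
  also have "\<dots> = (\<Sum>i\<le>n. s ^ i / fact i * (t ^ (n - i) / fact (n - i)))"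
    by (intro sum.cong refl) (simp add: binomial_fact)
  finally show ?thesis by simp
qed

lemma mexp_add:
  assumes fin: "finite S" and x: "x \<in> S"
  shows "mexp S Q (s + t) x y = (\<Sum>z\<in>S. mexp S Q s x z * mexp S Q t z y)"
proof -
  define a where "a z k = s ^ k / fact k * mpow S Q k x z" for z k
  define b where "b z k = t ^ k / fact k * mpow S Q k z y" for z k
  have sa: "summable (\<lambda>k. norm (a z k))" if "z \<in> S" for z
    using mpow_summable[OF fin x] unfolding a_def real_norm_def .
  have sb: "summable (\<lambda>k. norm (b z k))" if "z \<in> S" for z
    using mpow_summable[OF fin that] unfolding b_def real_norm_def .
  have "(\<Sum>z\<in>S. mexp S Q s x z * mexp S Q t z y) = (\<Sum>z\<in>S. (\<Sum>k. a z k) * (\<Sum>k. b z k))"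
    by (simp add: mexp_def a_def b_def)
  also have "\<dots> = (\<Sum>z\<in>S. (\<Sum>k. \<Sum>i\<le>k. a z i * b z (k - i)))"
    by (intro sum.cong refl Cauchy_product sa sb)
  also have "\<dots> = (\<Sum>k. \<Sum>z\<in>S. \<Sum>i\<le>k. a z i * b z (k - i))"
    by (rule suminf_sum[symmetric]) (intro summable_Cauchy_product sa sb)
  also have "\<dots> = (\<Sum>k. (s + t) ^ k / fact k * mpow S Q k x y)"
  proof (intro suminf_cong)
    fix k
    have "(\<Sum>z\<in>S. \<Sum>i\<le>k. a z i * b z (k - i))
        = (\<Sum>i\<le>k. s ^ i / fact i * (t ^ (k - i) / fact (k - i)) * (\<Sum>z\<in>S. mpow S Q i x z * mpow S Q (k - i) z y))"
      unfolding a_def b_def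
      by (subst sum.swap) (auto simp add: sum_distrib_left mult_ac intro!: sum.cong)
    also have "\<dots> = (\<Sum>i\<le>k. s ^ i / fact i * (t ^ (k - i) / fact (k - i)) * mpow S Q k x y)"
      by (intro sum.cong refl) (simp add: mpow_add[OF x fin, symmetric])
    also have "\<dots> = (s + t) ^ k / fact k * mpow S Q k x y"
      by (simp only: sum_distrib_right[symmetric] binom_fact_sum)
    finally show "(\<Sum>z\<in>S. \<Sum>i\<le>k. a z i * b z (k - i)) = (s + t) ^ k / fact k * mpow S Q k x y" .
  qed
  finally show ?thesis by (simp add: mexp_def)
qed

lemma binom_shift_seq:
  fixes f :: "nat \<Rightarrow> real"
  shows "(\<Sum>k\<le>n. of_nat (n choose k) * f (Suc k) * c ^ (n - k))
       + c * (\<Sum>k\<le>n. of_nat (n choose k) * f k * c ^ (n - k))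
       = (\<Sum>k\<le>Suc n. of_nat (Suc n choose k) * f k * c ^ (Suc n - k))"
proof -
  define g where "g k = of_nat (n choose k) * f k * c ^ (Suc n - k)" for k
  have 1: "c * (\<Sum>k\<le>n. of_nat (n choose k) * f k * c ^ (n - k)) = (\<Sum>k\<le>n. g k)"
    unfolding sum_distrib_left g_def
    by (intro sum.cong refl) (simp add: Suc_diff_le mult_ac)
  have 2: "(\<Sum>k\<le>n. g k) = (\<Sum>k\<le>Suc n. g k)"
    by (simp add: g_def)
  have 3: "(\<Sum>k\<le>Suc n. g k) = g 0 + (\<Sum>k\<le>n. g (Suc k))"
    by (rule sum.atMost_Suc_shift)
  have 4: "(\<Sum>k\<le>Suc n. of_nat (Suc n choose k) * f k * c ^ (Suc n - k))
      = f 0 * c ^ Suc n + (\<Sum>k\<le>n. of_nat (Suc n choose Suc k) * f (Suc k) * c ^ (n - k))"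
    by (subst sum.atMost_Suc_shift) simp
  have 5: "(\<Sum>k\<le>n. of_nat (Suc n choose Suc k) * f (Suc k) * c ^ (n - k))
      = (\<Sum>k\<le>n. of_nat (n choose k) * f (Suc k) * c ^ (n - k)) + (\<Sum>k\<le>n. g (Suc k))"
    unfolding g_def sum.distrib[symmetric]
    by (intro sum.cong refl) (simp add: algebra_simps)
  show ?thesis using 1 2 3 4 5 by (simp add: g_def binomial_eq_0)
qed

definition shiftm :: "('a \<Rightarrow> 'a \<Rightarrow> real) \<Rightarrow> real \<Rightarrow> 'a \<Rightarrow> 'a \<Rightarrow> real" where
  "shiftm Q c x y = Q x y + (if x = y then c else 0)"

lemma mpow_shift:
  assumes fin: "finite S"
  shows "x \<in> S \<Longrightarrow> mpow S (shiftm Q c) n x y = (\<Sum>k\<le>n. of_nat (n choose k) * mpow S Q k x y * c ^ (n - k))"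
proof (induction n arbitrary: x)
  case 0 then show ?case by simp
next
  case (Suc n)
  have "mpow S (shiftm Q c) (Suc n) x y
      = (\<Sum>z\<in>S. Q x z * mpow S (shiftm Q c) n z y) + (\<Sum>z\<in>S. (if x = z then c else 0) * mpow S (shiftm Q c) n z y)"
    by (simp add: shiftm_def distrib_right sum.distrib)
  also have "(\<Sum>z\<in>S. (if x = z then c else 0) * mpow S (shiftm Q c) n z y) = c * mpow S (shiftm Q c) n x y"
  proof -
    have "(\<Sum>z\<in>S. (if x = z then c else 0) * mpow S (shiftm Q c) n z y) = (\<Sum>z\<in>S. if x = z then c * mpow S (shiftm Q c) n z y else 0)"
      by (intro sum.cong) auto
    then show ?thesis using Suc.prems fin by simp
  qed
  also have "(\<Sum>z\<in>S. Q x z * mpow S (shiftm Q c) n z y)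
      = (\<Sum>k\<le>n. of_nat (n choose k) * mpow S Q (Suc k) x y * c ^ (n - k))"
  proof -
    have "(\<Sum>z\<in>S. Q x z * mpow S (shiftm Q c) n z y)
        = (\<Sum>z\<in>S. \<Sum>k\<le>n. Q x z * (of_nat (n choose k) * mpow S Q k z y * c ^ (n - k)))"
      by (intro sum.cong refl) (simp add: Suc.IH sum_distrib_left)
    also have "\<dots> = (\<Sum>k\<le>n. \<Sum>z\<in>S. Q x z * (of_nat (n choose k) * mpow S Q k z y * c ^ (n - k)))"
      by (rule sum.swap)
    also have "\<dots> = (\<Sum>k\<le>n. of_nat (n choose k) * mpow S Q (Suc k) x y * c ^ (n - k))"
      by (intro sum.cong refl) (simp add: sum_distrib_left sum_distrib_right mult_ac)
    finally show ?thesis .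
  qed
  finally show ?case
    using binom_shift_seq[of n "\<lambda>k. mpow S Q k x y" c] Suc.IH[OF Suc.prems] by simp
qed

lemma exp_series_real: "exp (x::real) = (\<Sum>n. inverse (fact n) * x ^ n)"
  using exp_converges[of x] by (simp add: sums_iff field_simps)

lemma mexp_shift:
  assumes fin: "finite S" and x: "x \<in> S"
  shows "mexp S (shiftm Q c) t x y = exp (c * t) * mexp S Q t x y"
proof -
  define a where "a i = t ^ i / fact i * mpow S Q i x y" for i
  define e where "e j = inverse (fact j) * (c * t) ^ j" for j
  have sa: "summable (\<lambda>k. norm (a k))"
    using mpow_summable[OF fin x] unfolding a_def real_norm_def .
  have se: "summable (\<lambda>k. norm (e k))"
    unfolding e_def real_norm_def using summable_exp[of "\<bar>c * t\<bar>"]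
    by (simp add: abs_mult power_abs)
  have "exp (c * t) * mexp S Q t x y = (\<Sum>k. a k) * (\<Sum>k. e k)"
    by (simp add: mexp_def a_def e_def exp_series_real)
  also have "\<dots> = (\<Sum>k. \<Sum>i\<le>k. a i * e (k - i))"
    by (rule Cauchy_product[OF sa se])
  also have "\<dots> = (\<Sum>k. t ^ k / fact k * mpow S (shiftm Q c) k x y)"
  proof (intro suminf_cong)
    fix k
    have "a i * e (k - i) = t ^ k / fact k * (of_nat (k choose i) * mpow S Q i x y * c ^ (k - i))"
      if "i \<le> k" for i
    proof -
      have tt: "t ^ k = t ^ i * t ^ (k - i)" using that by (simp add: power_add[symmetric])
      show ?thesis unfolding a_def e_def using that
        by (simp add: binomial_fact tt power_mult_distrib divide_simps)
    qed
    then have "(\<Sum>i\<le>k. a i * e (k - i)) = (\<Sum>i\<le>k. t ^ k / fact k * (of_nat (k choose i) * mpow S Q i x y * c ^ (k - i)))"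
      by (intro sum.cong) auto
    also have "\<dots> = t ^ k / fact k * mpow S (shiftm Q c) k x y"
      by (simp add: mpow_shift[OF fin x] sum_distrib_left)
    finally show "(\<Sum>i\<le>k. a i * e (k - i)) = t ^ k / fact k * mpow S (shiftm Q c) k x y" .
  qed
  finally show ?thesis by (simp add: mexp_def)
qed

lemma mpow_nonneg:
  assumes "\<And>a b. a \<in> S \<Longrightarrow> b \<in> S \<Longrightarrow> 0 \<le> M a b"
  shows "a \<in> S \<Longrightarrow> 0 \<le> mpow S M k a b"
proof (induction k arbitrary: a)
  case 0 then show ?case by simp
next
  case (Suc k) then show ?case by (auto intro!: sum_nonneg mult_nonneg_nonneg assms)
qed

lemma mexp_nonneg_gen:
  assumes fin: "finite S" and M: "\<And>a b. a \<in> S \<Longrightarrow> b \<in> S \<Longrightarrow> 0 \<le> M a b"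
    and a: "a \<in> S" and t: "0 \<le> t"
  shows "0 \<le> mexp S M t a b"
  unfolding mexp_def
  by (intro suminf_nonneg mpow_summable'[OF fin a] mult_nonneg_nonneg divide_nonneg_pos
      mpow_nonneg[OF M a]) (use t in auto)

lemma mpow_mono_set:
  assumes T: "finite T" and ST: "S \<subseteq> T" and M: "\<And>a b. a \<in> T \<Longrightarrow> b \<in> T \<Longrightarrow> 0 \<le> M a b"
  shows "a \<in> S \<Longrightarrow> mpow S M k a b \<le> mpow T M k a b"
proof (induction k arbitrary: a)
  case 0 then show ?case by simp
next
  case (Suc k)
  have aT: "a \<in> T" using Suc.prems ST by auto
  have "(\<Sum>z\<in>S. M a z * mpow S M k z b) \<le> (\<Sum>z\<in>S. M a z * mpow T M k z b)"
    by (intro sum_mono mult_left_mono Suc.IH M) (use ST aT in auto)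
  also have "\<dots> \<le> (\<Sum>z\<in>T. M a z * mpow T M k z b)"
    by (intro sum_mono2 T ST mult_nonneg_nonneg M mpow_nonneg[where S=T]) (use aT in auto)
  finally show ?case by simp
qed

lemma mexp_mono_set:
  assumes T: "finite T" and ST: "S \<subseteq> T" and M: "\<And>a b. a \<in> T \<Longrightarrow> b \<in> T \<Longrightarrow> 0 \<le> M a b"
    and a: "a \<in> S" and t: "0 \<le> t"
  shows "mexp S M t a b \<le> mexp T M t a b"
proof -
  have S: "finite S" using T ST finite_subset by auto
  have aT: "a \<in> T" using a ST by auto
  show ?thesis unfolding mexp_def
    by (intro suminf_le mpow_summable'[OF S a] mpow_summable'[OF T aT] mult_left_mono
        mpow_mono_set[OF T ST M a]) (use t in auto)
qed

lemma mexp_zero: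
  shows "mexp S M 0 a b = (if a = b then 1 else 0)"
proof -
  have "mexp S M 0 a b = (\<Sum>k\<in>{0}. (0::real) ^ k / fact k * mpow S M k a b)"
    unfolding mexp_def by (rule suminf_finite) auto
  then show ?thesis by simp
qed

definition crate :: "'a set \<Rightarrow> ('a \<Rightarrow> 'a \<Rightarrow> real) \<Rightarrow> real" where
  "crate Om R = 1 + (\<Sum>a\<in>Om. \<Sum>z\<in>Om - {a}. R a z)"

lemma exit_le_crate:
  assumes "valid_rates Om R" "a \<in> Om"
  shows "(\<Sum>z\<in>Om - {a}. R a z) + 1 \<le> crate Om R"
proof -
  have fin: "finite Om" using assms(1) by (simp add: valid_rates_def)
  have nn: "\<And>a z. a \<in> Om \<Longrightarrow> z \<in> Om - {a} \<Longrightarrow> 0 \<le> R a z"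
    using assms(1) by (auto simp: valid_rates_def)
  have "(\<Sum>z\<in>Om - {a}. R a z) \<le> (\<Sum>a\<in>Om. \<Sum>z\<in>Om - {a}. R a z)"
    by (rule member_le_sum[of a Om "\<lambda>a. \<Sum>z\<in>Om - {a}. R a z"]) (use assms fin nn in \<open>auto intro: sum_nonneg\<close>)
  then show ?thesis by (simp add: crate_def)
qed

lemma crate_pos: "valid_rates Om R \<Longrightarrow> 0 < crate Om R"
proof -
  assume v: "valid_rates Om R"
  then obtain a where "a \<in> Om" by (auto simp: valid_rates_def)
  moreover have "0 \<le> (\<Sum>z\<in>Om - {a}. R a z)"
    using v \<open>a \<in> Om\<close> by (auto simp: valid_rates_def intro!: sum_nonneg)
  ultimately show ?thesis using exit_le_crate[OF v] by fastforce
qed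

lemma shift_nonneg:
  assumes "valid_rates Om R" "a \<in> Om" "b \<in> Om"
  shows "0 \<le> shiftm (generator Om R) (crate Om R) a b"
  using exit_le_crate[OF assms(1,2)] assms by (auto simp: shiftm_def generator_def valid_rates_def)

lemma mexp_gen_eq:
  assumes fin: "finite S" and a: "a \<in> S"
  shows "mexp S (generator Om R) t a b = exp (- (crate Om R * t)) * mexp S (shiftm (generator Om R) (crate Om R)) t a b"
  by (simp add: mexp_shift[OF fin a] exp_minus field_simps)

lemma mexp_gen_nonneg:
  assumes v: "valid_rates Om R" and S: "S \<subseteq> Om" and a: "a \<in> S" and t: "0 \<le> t"
  shows "0 \<le> mexp S (generator Om R) t a b"
proof -
  have fin: "finite S" using v S by (auto simp: valid_rates_def intro: finite_subset)
  show ?thesis unfolding mexp_gen_eq[OF fin a]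
    by (intro mult_nonneg_nonneg mexp_nonneg_gen[OF fin _ a t]) (use shift_nonneg[OF v] S in auto)
qed

lemma mexp_gen_mono:
  assumes v: "valid_rates Om R" and S: "S \<subseteq> Om" and a: "a \<in> S" and t: "0 \<le> t"
  shows "mexp S (generator Om R) t a b \<le> mexp Om (generator Om R) t a b"
proof -
  have fin: "finite Om" using v by (auto simp: valid_rates_def)
  have finS: "finite S" using fin S by (auto intro: finite_subset)
  have aO: "a \<in> Om" using a S by auto
  show ?thesis unfolding mexp_gen_eq[OF fin aO] mexp_gen_eq[OF finS a]
    by (intro mult_left_mono mexp_mono_set[OF fin S _ a t]) (use shift_nonneg[OF v] in auto)
qed

lemma gen_rowsum:
  assumes v: "valid_rates Om R" and x: "x \<in> Om"
  shows "(\<Sum>y\<in>Om. generator Om R x y) = 0"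
proof -
  have fin: "finite Om" using v by (auto simp: valid_rates_def)
  have "(\<Sum>y\<in>Om. generator Om R x y) = generator Om R x x + (\<Sum>y\<in>Om - {x}. generator Om R x y)"
    using fin x by (simp add: sum.remove)
  also have "(\<Sum>y\<in>Om - {x}. generator Om R x y) = (\<Sum>y\<in>Om - {x}. R x y)"
    by (intro sum.cong) (auto simp: generator_def)
  finally show ?thesis by (simp add: generator_def)
qed

lemma gen_rowsum_sub:
  assumes v: "valid_rates Om R" and B: "B \<subseteq> Om" and x: "x \<in> B"
  shows "(\<Sum>y\<in>B. generator Om R x y) = - (\<Sum>z\<in>Om - B. R x z)"
proof -
  have fin: "finite Om" using v by (auto simp: valid_rates_def)
  have finB: "finite B" using fin B by (auto intro: finite_subset)
  have "(\<Sum>y\<in>B. generator Om R x y) = generator Om R x x + (\<Sum>y\<in>B - {x}. generator Om R x y)"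
    using finB x by (simp add: sum.remove)
  also have "(\<Sum>y\<in>B - {x}. generator Om R x y) = (\<Sum>y\<in>B - {x}. R x y)"
    by (intro sum.cong) (auto simp: generator_def)
  also have "(\<Sum>z\<in>Om - {x}. R x z) = (\<Sum>y\<in>B - {x}. R x y) + (\<Sum>z\<in>Om - B. R x z)"
  proof -
    have eq: "Om - {x} = (B - {x}) \<union> (Om - B)" using B x by auto
    show ?thesis unfolding eq by (rule sum.union_disjoint) (use fin finB in auto)
  qed
  then have "generator Om R x x = - (\<Sum>y\<in>B - {x}. R x y) - (\<Sum>z\<in>Om - B. R x z)"
    by (simp add: generator_def)
  finally show ?thesis by simp
qed

lemma mpow_rowsum:
  assumes v: "valid_rates Om R"
  shows "x \<in> Om \<Longrightarrow> (\<Sum>y\<in>Om. mpow Om (generator Om R) k x y) = (if k = 0 then 1 else 0)"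
proof (induction k arbitrary: x)
  case 0
  have fin: "finite Om" using v by (auto simp: valid_rates_def)
  then show ?case using 0 by simp
next
  case (Suc k)
  have "(\<Sum>y\<in>Om. mpow Om (generator Om R) (Suc k) x y)
      = (\<Sum>z\<in>Om. generator Om R x z * (\<Sum>y\<in>Om. mpow Om (generator Om R) k z y))"
    by (simp add: sum_distrib_left) (rule sum.swap)
  also have "\<dots> = (\<Sum>z\<in>Om. generator Om R x z * (if k = 0 then 1 else 0))"
    by (intro sum.cong refl) (simp add: Suc.IH)
  also have "\<dots> = 0" using gen_rowsum[OF v Suc.prems] by (simp add: sum_distrib_right[symmetric])
  finally show ?case by simp
qed

lemma mexp_rowsum:
  assumes v: "valid_rates Om R" and x: "x \<in> Om"
  shows "(\<Sum>y\<in>Om. mexp Om (generator Om R) t x y) = 1"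
proof -
  have fin: "finite Om" using v by (auto simp: valid_rates_def)
  have "(\<Sum>y\<in>Om. mexp Om (generator Om R) t x y)
      = (\<Sum>k. \<Sum>y\<in>Om. t ^ k / fact k * mpow Om (generator Om R) k x y)"
    unfolding mexp_def by (rule suminf_sum[symmetric]) (rule mpow_summable'[OF fin x])
  also have "\<dots> = (\<Sum>k. if k = 0 then 1 else 0)"
    by (intro suminf_cong) (simp only: sum_distrib_left[symmetric] mpow_rowsum[OF v x], simp)
  also have "\<dots> = (\<Sum>k\<in>{0::nat}. if k = 0 then 1 else (0::real))"
    by (rule suminf_finite) auto
  finally show ?thesis by simp
qed

lemma mexp_stationary:
  assumes v: "valid_rates Om R" and st: "stationary Om R nu" and y: "y \<in> Om"
  shows "(\<Sum>x\<in>Om. nu x * mexp Om (generator Om R) t x y) = nu y"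
proof -
  have fin: "finite Om" using v by (auto simp: valid_rates_def)
  have k: "(\<Sum>x\<in>Om. nu x * mpow Om (generator Om R) k x y) = (if k = 0 then nu y else 0)" for k
  proof (cases k)
    case 0
    have "(\<Sum>x\<in>Om. nu x * (if x = y then 1 else 0)) = (\<Sum>x\<in>Om. if x = y then nu x else 0)"
      by (intro sum.cong) auto
    then show ?thesis using 0 fin y by simp
  next
    case (Suc j)
    have "(\<Sum>x\<in>Om. nu x * mpow Om (generator Om R) k x y)
        = (\<Sum>z\<in>Om. (\<Sum>x\<in>Om. nu x * generator Om R x z) * mpow Om (generator Om R) j z y)"
      unfolding Suc by (simp add: sum_distrib_left sum_distrib_right mult.assoc) (rule sum.swap)
    also have "\<dots> = 0" using st by (simp add: stationary_def)
    finally show ?thesis using Suc by simp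
  qed
  have "(\<Sum>x\<in>Om. nu x * mexp Om (generator Om R) t x y)
      = (\<Sum>k. \<Sum>x\<in>Om. nu x * (t ^ k / fact k * mpow Om (generator Om R) k x y))"
  proof -
    have "(\<Sum>x\<in>Om. nu x * mexp Om (generator Om R) t x y)
        = (\<Sum>x\<in>Om. \<Sum>k. nu x * (t ^ k / fact k * mpow Om (generator Om R) k x y))"
      unfolding mexp_def
      by (intro sum.cong refl suminf_mult[symmetric] mpow_summable'[OF fin])
    also have "\<dots> = (\<Sum>k. \<Sum>x\<in>Om. nu x * (t ^ k / fact k * mpow Om (generator Om R) k x y))"
      by (intro suminf_sum[symmetric] summable_mult mpow_summable'[OF fin])
    finally show ?thesis .
  qed
  also have "\<dots> = (\<Sum>k. if k = 0 then nu y else 0)"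
  proof (intro suminf_cong)
    fix k
    have "(\<Sum>x\<in>Om. nu x * (t ^ k / fact k * mpow Om (generator Om R) k x y))
        = t ^ k / fact k * (\<Sum>x\<in>Om. nu x * mpow Om (generator Om R) k x y)"
      by (simp add: sum_distrib_left mult_ac)
    then show "(\<Sum>x\<in>Om. nu x * (t ^ k / fact k * mpow Om (generator Om R) k x y)) = (if k = 0 then nu y else 0)"
      by (simp add: k)
  qed
  also have "\<dots> = (\<Sum>k\<in>{0::nat}. if k = 0 then nu y else 0)"
    by (rule suminf_finite) auto
  finally show ?thesis by simp
qed

lemma contract:
  fixes w :: "'a \<Rightarrow> real" and g :: "'b \<Rightarrow> real" and p :: "'a \<Rightarrow> 'b \<Rightarrow> real"
  assumes fin: "finite S" and w0: "(\<Sum>z\<in>S. w z) = 0"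
  shows "(\<Sum>y\<in>T. \<bar>\<Sum>z\<in>S. w z * p z y\<bar>) \<le> (\<Sum>z\<in>S. \<bar>w z\<bar> * (\<Sum>y\<in>T. \<bar>p z y - g y\<bar>))"
proof -
  have eq: "(\<Sum>z\<in>S. w z * p z y) = (\<Sum>z\<in>S. w z * (p z y - g y))" for y
  proof -
    have "(\<Sum>z\<in>S. w z * (p z y - g y)) = (\<Sum>z\<in>S. w z * p z y) - (\<Sum>z\<in>S. w z) * g y"
      by (simp add: right_diff_distrib sum_subtractf sum_distrib_right)
    then show ?thesis using w0 by simp
  qed
  have "(\<Sum>y\<in>T. \<bar>\<Sum>z\<in>S. w z * p z y\<bar>) \<le> (\<Sum>y\<in>T. \<Sum>z\<in>S. \<bar>w z\<bar> * \<bar>p z y - g y\<bar>)"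
    unfolding eq by (intro sum_mono) (simp add: abs_mult[symmetric] sum_abs)
  also have "\<dots> = (\<Sum>z\<in>S. \<bar>w z\<bar> * (\<Sum>y\<in>T. \<bar>p z y - g y\<bar>))"
    by (subst sum.swap) (simp add: sum_distrib_left)
  finally show ?thesis .
qed

locale mc =
  fixes Om :: "'a set" and R :: "'a \<Rightarrow> 'a \<Rightarrow> real" and nu :: "'a \<Rightarrow> real" and A :: "'a set"
  assumes v: "valid_rates Om R"
    and irr: "irreducible_chain Om R"
    and st: "stationary Om R nu"
    and AO: "A \<subseteq> Om"
    and Ane: "A \<noteq> {}"
begin

abbreviation "Q \<equiv> generator Om R"
abbreviation "B \<equiv> Om - A"
abbreviation "P \<equiv> mexp Om Q"
abbreviation "EB \<equiv> mexp B Q"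
definition "rs t x = (\<Sum>y\<in>B. EB t x y)"
abbreviation "Sv \<equiv> survival Om R nu A"
definition "flux = (\<Sum>x\<in>B. nu x * (\<Sum>y\<in>A. R x y))"
definition "mu t z = (\<Sum>x\<in>B. nu x * EB t x z)"
abbreviation "cc \<equiv> crate Om R"

lemma finO: "finite Om" using v by (simp add: valid_rates_def)
lemma finB: "finite B" using finO by simp
lemma finA: "finite A" using finO AO finite_subset by auto
lemma BO: "B \<subseteq> Om" by auto
lemma OBA: "Om - B = A" using AO by auto

lemma nu_nonneg: "x \<in> Om \<Longrightarrow> 0 \<le> nu x" using st by (simp add: stationary_def)
lemma nu_sum: "(\<Sum>x\<in>Om. nu x) = 1" using st by (simp add: stationary_def)
lemma nu_split: "(\<Sum>x\<in>B. nu x) = 1 - (\<Sum>x\<in>A. nu x)"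
proof -
  have "(\<Sum>x\<in>Om. nu x) = (\<Sum>x\<in>B. nu x) + (\<Sum>x\<in>A. nu x)"
    using sum.subset_diff[OF AO finO] by simp
  then show ?thesis using nu_sum by simp
qed
lemma nuB_le1: "(\<Sum>x\<in>B. nu x) \<le> 1"
  using nu_split sum_nonneg[of A nu] nu_nonneg AO by auto

lemma P_nonneg: "x \<in> Om \<Longrightarrow> 0 \<le> t \<Longrightarrow> 0 \<le> P t x y"
  by (rule mexp_gen_nonneg[OF v subset_refl])
lemma EB_nonneg: "x \<in> B \<Longrightarrow> 0 \<le> t \<Longrightarrow> 0 \<le> EB t x y"
  by (rule mexp_gen_nonneg[OF v BO])
lemma EB_le_P: "x \<in> B \<Longrightarrow> 0 \<le> t \<Longrightarrow> EB t x y \<le> P t x y"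
  by (rule mexp_gen_mono[OF v BO])
lemma P_rowsum: "x \<in> Om \<Longrightarrow> (\<Sum>y\<in>Om. P t x y) = 1"
  by (rule mexp_rowsum[OF v])
lemma P_stat: "y \<in> Om \<Longrightarrow> (\<Sum>x\<in>Om. nu x * P t x y) = nu y"
  by (rule mexp_stationary[OF v st])
lemma P_add: "x \<in> Om \<Longrightarrow> P (s + t) x y = (\<Sum>z\<in>Om. P s x z * P t z y)"
  by (rule mexp_add[OF finO])
lemma EB_add: "x \<in> B \<Longrightarrow> EB (s + t) x y = (\<Sum>z\<in>B. EB s x z * EB t z y)"
  by (rule mexp_add[OF finB])
lemma P_le1: "x \<in> Om \<Longrightarrow> 0 \<le> t \<Longrightarrow> y \<in> Om \<Longrightarrow> P t x y \<le> 1"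
proof -
  assume x: "x \<in> Om" and t: "0 \<le> t" and y: "y \<in> Om"
  have "P t x y \<le> (\<Sum>y\<in>Om. P t x y)"
    by (rule member_le_sum) (use y finO P_nonneg[OF x t] in auto)
  then show ?thesis using P_rowsum[OF x] by simp
qed

lemma rs_nonneg: "x \<in> B \<Longrightarrow> 0 \<le> t \<Longrightarrow> 0 \<le> rs t x"
  unfolding rs_def by (intro sum_nonneg EB_nonneg)
lemma rs_le1: "x \<in> B \<Longrightarrow> 0 \<le> t \<Longrightarrow> rs t x \<le> 1"
proof -
  assume x: "x \<in> B" and t: "0 \<le> t"
  have xO: "x \<in> Om" using x by auto
  have "rs t x \<le> (\<Sum>y\<in>B. P t x y)" unfolding rs_def by (intro sum_mono EB_le_P x t)
  also have "\<dots> \<le> (\<Sum>y\<in>Om. P t x y)" by (intro sum_mono2 finO BO P_nonneg[OF xO t]) 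
  finally show ?thesis using P_rowsum[OF xO] by simp
qed
lemma rs_zero: "x \<in> B \<Longrightarrow> rs 0 x = 1"
  unfolding rs_def mexp_zero using finB by simp
lemma rs_add: "x \<in> B \<Longrightarrow> rs (s + t) x = (\<Sum>z\<in>B. EB s x z * rs t z)"
  unfolding rs_def by (simp add: EB_add sum_distrib_left) (rule sum.swap)

lemma Sv_def': "Sv t = (\<Sum>x\<in>B. nu x * rs t x)"
  by (simp add: survival_def rs_def)
lemma Sv_mu: "Sv t = (\<Sum>z\<in>B. mu t z)"
  unfolding Sv_def' rs_def mu_def by (simp add: sum_distrib_left) (rule sum.swap)
lemma Sv_mu_add: "Sv (t + h) = (\<Sum>z\<in>B. mu t z * rs h z)"
  unfolding Sv_def' mu_def by (simp add: rs_add sum_distrib_left sum_distrib_right mult.assoc) (rule sum.swap)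
lemma mu_nonneg: "0 \<le> t \<Longrightarrow> z \<in> B \<Longrightarrow> 0 \<le> mu t z"
  unfolding mu_def by (auto intro!: sum_nonneg mult_nonneg_nonneg nu_nonneg EB_nonneg)
lemma mu_le_nu: "0 \<le> t \<Longrightarrow> z \<in> B \<Longrightarrow> mu t z \<le> nu z"
proof -
  assume t: "0 \<le> t" and z: "z \<in> B"
  have "mu t z \<le> (\<Sum>x\<in>B. nu x * P t x z)"
    unfolding mu_def by (auto intro!: sum_mono mult_left_mono nu_nonneg EB_le_P t)
  also have "\<dots> \<le> (\<Sum>x\<in>Om. nu x * P t x z)"
    by (intro sum_mono2 finO BO mult_nonneg_nonneg nu_nonneg P_nonneg t) auto
  also have "\<dots> = nu z" using z by (simp add: P_stat)
  finally show ?thesis .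
qed

lemma Sv_nonneg: "0 \<le> t \<Longrightarrow> 0 \<le> Sv t"
  unfolding Sv_def' by (auto intro!: sum_nonneg mult_nonneg_nonneg nu_nonneg rs_nonneg)
lemma Sv_le1: "0 \<le> t \<Longrightarrow> Sv t \<le> 1"
proof -
  assume t: "0 \<le> t"
  have "Sv t \<le> (\<Sum>x\<in>B. nu x)"
    unfolding Sv_def' by (intro sum_mono) (auto intro!: mult_right_le_one_le nu_nonneg rs_nonneg rs_le1 t)
  then show ?thesis using nuB_le1 by simp
qed
lemma Sv_zero: "Sv 0 = 1 - (\<Sum>x\<in>A. nu x)"
  unfolding Sv_def' using nu_split by (simp add: rs_zero)

lemma Sv_diff: "Sv t - Sv (t + h) = (\<Sum>z\<in>B. mu t z * (1 - rs h z))"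
proof -
  have "Sv t - Sv (t + h) = (\<Sum>z\<in>B. mu t z) - (\<Sum>z\<in>B. mu t z * rs h z)"
    by (simp only: Sv_mu_add Sv_mu[of t])
  also have "\<dots> = (\<Sum>z\<in>B. mu t z * (1 - rs h z))"
    by (simp add: sum_subtractf right_diff_distrib)
  finally show ?thesis .
qed

lemma mu_zero: "z \<in> B \<Longrightarrow> mu 0 z = nu z"
proof -
  assume z: "z \<in> B"
  have "mu 0 z = (\<Sum>x\<in>B. if x = z then nu x else 0)"
    unfolding mu_def mexp_zero by (intro sum.cong) auto
  then show ?thesis using z finB by simp
qed

lemma Sv_mono_step: "0 \<le> t \<Longrightarrow> 0 \<le> h \<Longrightarrow> Sv (t + h) \<le> Sv t"
proof -
  assume t: "0 \<le> t" and h: "0 \<le> h"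
  have "0 \<le> (\<Sum>z\<in>B. mu t z * (1 - rs h z))"
    by (intro sum_nonneg mult_nonneg_nonneg mu_nonneg t) (use rs_le1 h in force)+
  then show ?thesis using Sv_diff[of t h] by simp
qed

lemma Sv_mono: "0 \<le> a \<Longrightarrow> a \<le> b \<Longrightarrow> Sv b \<le> Sv a"
  using Sv_mono_step[of a "b - a"] by simp

lemma Sv_diff_le: "0 \<le> t \<Longrightarrow> 0 \<le> h \<Longrightarrow> Sv t - Sv (t + h) \<le> Sv 0 - Sv h"
proof -
  assume t: "0 \<le> t" and h: "0 \<le> h"
  have "Sv t - Sv (t + h) \<le> (\<Sum>z\<in>B. nu z * (1 - rs h z))"
    unfolding Sv_diff
    by (intro sum_mono mult_right_mono mu_le_nu t) (auto simp: rs_le1 h)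
  also have "\<dots> = Sv 0 - Sv (0 + h)"
    using Sv_diff[of 0 h] by (simp add: mu_zero)
  finally show ?thesis by simp
qed


lemma Rout_nonneg: "x \<in> B \<Longrightarrow> 0 \<le> (\<Sum>y\<in>A. R x y)"
proof -
  assume x: "x \<in> B"
  show ?thesis
  proof (intro sum_nonneg)
    fix y assume y: "y \<in> A"
    then have "y \<in> Om" "x \<noteq> y" "x \<in> Om" using AO x by auto
    then show "0 \<le> R x y" using v unfolding valid_rates_def by blast
  qed
qed

lemma flux_nonneg: "0 \<le> flux"
  unfolding flux_def by (auto intro!: sum_nonneg mult_nonneg_nonneg nu_nonneg Rout_nonneg)

lemma rs_first:
  assumes x: "x \<in> B" and h: "0 \<le> h"
  shows "1 - rs h x \<le> h * (\<Sum>y\<in>A. R x y) + cc\<^sup>2 * h\<^sup>2"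
proof -
  let ?Qc = "shiftm Q cc"
  have Qc_nn: "\<And>a b. a \<in> B \<Longrightarrow> b \<in> B \<Longrightarrow> 0 \<le> ?Qc a b"
    using shift_nonneg[OF v] by auto
  have low: "(if x = y then 1 else 0) + h * ?Qc x y \<le> mexp B ?Qc h x y" if y: "y \<in> B" for y
  proof -
    have "(\<Sum>k\<in>{0,1}. h ^ k / fact k * mpow B ?Qc k x y) \<le> mexp B ?Qc h x y"
      unfolding mexp_def
      by (intro sum_le_suminf mpow_summable'[OF finB x] mult_nonneg_nonneg divide_nonneg_pos
          mpow_nonneg[OF Qc_nn x]) (use h in auto)
    moreover have "mpow B ?Qc 1 x y = ?Qc x y"
    proof -
      have "mpow B ?Qc 1 x y = (\<Sum>z\<in>B. if z = y then ?Qc x z else 0)"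
        by (simp, intro sum.cong) auto
      then show ?thesis using y finB by simp
    qed
    ultimately show ?thesis by simp
  qed
  have rsum: "(\<Sum>y\<in>B. ?Qc x y) = cc - (\<Sum>y\<in>A. R x y)"
  proof -
    have "(\<Sum>y\<in>B. ?Qc x y) = (\<Sum>y\<in>B. Q x y) + (\<Sum>y\<in>B. if x = y then cc else 0)"
      by (simp add: shiftm_def sum.distrib)
    also have "(\<Sum>y\<in>B. if x = y then cc else 0) = cc" using x finB by simp
    also have "(\<Sum>y\<in>B. Q x y) = - (\<Sum>y\<in>A. R x y)"
      using gen_rowsum_sub[OF v BO x] OBA by simp
    finally show ?thesis by simp
  qed
  have "exp (- (cc * h)) * (1 + h * (cc - (\<Sum>y\<in>A. R x y))) = exp (- (cc * h)) * (\<Sum>y\<in>B. (if x = y then 1 else 0) + h * ?Qc x y)"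
    using x finB by (simp add: sum.distrib sum_distrib_left[symmetric] rsum)
  also have "\<dots> \<le> exp (- (cc * h)) * (\<Sum>y\<in>B. mexp B ?Qc h x y)"
    by (intro mult_left_mono sum_mono low) auto
  also have "\<dots> = rs h x"
    unfolding rs_def mexp_gen_eq[OF finB x] by (simp add: sum_distrib_left)
  finally have 1: "exp (- (cc * h)) * (1 + h * (cc - (\<Sum>y\<in>A. R x y))) \<le> rs h x" .
  define u where "u = cc * h"
  have u: "0 \<le> u" using crate_pos[OF v] h by (simp add: u_def)
  define E where "E = exp (- u)"
  have E1: "E \<le> 1" "1 - u \<le> E" "0 < E" using u exp_ge_add_one_self[of "-u"] by (auto simp: E_def)
  have Ro: "0 \<le> h * (\<Sum>y\<in>A. R x y)" using h Rout_nonneg[OF x] by simp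
  have "(1 - u) * (1 + u) \<le> E * (1 + u)" using E1 u by (intro mult_right_mono) auto
  moreover have "E * (h * (\<Sum>y\<in>A. R x y)) \<le> h * (\<Sum>y\<in>A. R x y)"
    using E1 Ro by (simp add: mult_left_le_one_le)
  ultimately have "1 - u\<^sup>2 - h * (\<Sum>y\<in>A. R x y) \<le> E * (1 + h * (cc - (\<Sum>y\<in>A. R x y)))"
    by (simp add: u_def algebra_simps power2_eq_square)
  with 1 show ?thesis by (simp add: E_def u_def power_mult_distrib)
qed

lemma Sv0_diff: "0 \<le> h \<Longrightarrow> Sv 0 - Sv h \<le> h * flux + cc\<^sup>2 * h\<^sup>2"
proof -
  assume h: "0 \<le> h"
  have "Sv 0 - Sv h = (\<Sum>x\<in>B. nu x * (1 - rs h x))"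
    using Sv_diff[of 0 h] by (simp add: mu_zero)
  also have "\<dots> \<le> (\<Sum>x\<in>B. nu x * (h * (\<Sum>y\<in>A. R x y) + cc\<^sup>2 * h\<^sup>2))"
    by (intro sum_mono mult_left_mono rs_first h nu_nonneg) auto
  also have "\<dots> = h * flux + cc\<^sup>2 * h\<^sup>2 * (\<Sum>x\<in>B. nu x)"
    by (simp add: flux_def distrib_left sum.distrib sum_distrib_left sum_distrib_right mult_ac)
  also have "\<dots> \<le> h * flux + cc\<^sup>2 * h\<^sup>2"
    using nuB_le1 by (intro add_left_mono mult_right_le_one_le) (auto intro!: sum_nonneg nu_nonneg)
  finally show ?thesis .
qed

lemma Sv_iter: "0 \<le> t \<Longrightarrow> 0 \<le> d \<Longrightarrow> Sv t - Sv (t + real m * d) \<le> real m * (d * flux + cc\<^sup>2 * d\<^sup>2)"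
proof (induction m)
  case 0 then show ?case by simp
next
  case (Suc m)
  have "Sv (t + real m * d) - Sv (t + real m * d + d) \<le> Sv 0 - Sv d"
    using Suc.prems by (intro Sv_diff_le) auto
  also have "\<dots> \<le> d * flux + cc\<^sup>2 * d\<^sup>2" using Sv0_diff Suc.prems by simp
  finally show ?case using Suc by (simp add: algebra_simps)
qed

lemma Sv_lip: "0 \<le> t \<Longrightarrow> 0 \<le> h \<Longrightarrow> Sv t - Sv (t + h) \<le> h * flux"
proof (rule ccontr)
  assume t: "0 \<le> t" and h: "0 \<le> h" and c: "\<not> Sv t - Sv (t + h) \<le> h * flux"
  define X where "X = Sv t - Sv (t + h) - h * flux"
  have X: "0 < X" using c by (simp add: X_def)
  obtain m :: nat where m: "cc\<^sup>2 * h\<^sup>2 / X < real m" using reals_Archimedean2 by blast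
  define n where "n = Suc m"
  have n: "0 < real n" "cc\<^sup>2 * h\<^sup>2 / X < real n" using m by (auto simp: n_def)
  have "Sv t - Sv (t + real n * (h / real n)) \<le> real n * (h / real n * flux + cc\<^sup>2 * (h / real n)\<^sup>2)"
    using h t by (intro Sv_iter) auto
  also have "\<dots> = h * flux + cc\<^sup>2 * h\<^sup>2 / real n"
    using n by (simp add: field_simps power2_eq_square)
  finally have 1: "X \<le> cc\<^sup>2 * h\<^sup>2 / real n" using n by (simp add: X_def)
  have "cc\<^sup>2 * h\<^sup>2 < real n * X" using n X by (simp add: field_simps)
  then have "cc\<^sup>2 * h\<^sup>2 / real n < X" using n by (simp add: field_simps)
  with 1 show False by simp
qed

lemma Sv_lip': "0 \<le> a \<Longrightarrow> a \<le> b \<Longrightarrow> Sv a - Sv b \<le> (b - a) * flux"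
  using Sv_lip[of a "b - a"] by simp


definition "Dle t a \<longleftrightarrow> (\<forall>x\<in>Om. (\<Sum>y\<in>Om. \<bar>P t x y - nu y\<bar>) \<le> a)"

lemma decomp:
  assumes x: "x \<in> Om" and y: "y \<in> Om"
  shows "P (s + t) x y - nu y = (\<Sum>z\<in>Om. (P s x z - nu z) * P t z y)"
  using P_add[OF x, of s t y] P_stat[OF y, of t] by (simp add: left_diff_distrib sum_subtractf)

lemma wsum0: "x \<in> Om \<Longrightarrow> (\<Sum>z\<in>Om. P s x z - nu z) = 0"
  using P_rowsum nu_sum by (simp add: sum_subtractf)

lemma D_step:
  assumes x: "x \<in> Om" and bnd: "\<And>z. z \<in> Om \<Longrightarrow> (\<Sum>y\<in>Om. \<bar>P t z y - g y\<bar>) \<le> b"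
    and b: "0 \<le> b" and a: "(\<Sum>z\<in>Om. \<bar>P s x z - nu z\<bar>) \<le> a"
  shows "(\<Sum>y\<in>Om. \<bar>P (s + t) x y - nu y\<bar>) \<le> a * b"
proof -
  have "(\<Sum>y\<in>Om. \<bar>P (s + t) x y - nu y\<bar>) = (\<Sum>y\<in>Om. \<bar>\<Sum>z\<in>Om. (P s x z - nu z) * P t z y\<bar>)"
    using x by (intro sum.cong refl) (simp add: decomp)
  also have "\<dots> \<le> (\<Sum>z\<in>Om. \<bar>P s x z - nu z\<bar> * (\<Sum>y\<in>Om. \<bar>P t z y - g y\<bar>))"
    by (rule contract[OF finO wsum0[OF x]])
  also have "\<dots> \<le> (\<Sum>z\<in>Om. \<bar>P s x z - nu z\<bar> * b)"
    by (intro sum_mono mult_left_mono bnd) auto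
  also have "\<dots> \<le> a * b" using a b by (simp add: sum_distrib_right[symmetric] mult_right_mono)
  finally show ?thesis .
qed

lemma D_mult:
  assumes "Dle s a" "Dle t b"
  shows "Dle (s + t) (a * b)"
proof -
  obtain x0 where x0: "x0 \<in> Om" using v by (auto simp: valid_rates_def)
  have "0 \<le> (\<Sum>y\<in>Om. \<bar>P t x0 y - nu y\<bar>)" by (simp add: sum_nonneg)
  moreover have "(\<Sum>y\<in>Om. \<bar>P t x0 y - nu y\<bar>) \<le> b" using assms(2) x0 by (simp add: Dle_def)
  ultimately have b: "0 \<le> b" by linarith
  show ?thesis unfolding Dle_def
    using assms by (auto simp: Dle_def intro!: D_step[where g=nu] b)
qed

lemma D_pow: "Dle T a \<Longrightarrow> Dle (real (Suc k) * T) (a ^ Suc k)"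
proof (induction k)
  case 0 then show ?case by simp
next
  case (Suc k)
  have "Dle (real (Suc k) * T + T) (a ^ Suc k * a)" by (rule D_mult[OF Suc.IH[OF Suc.prems] Suc.prems])
  then show ?case by (simp add: algebra_simps)
qed

lemma D_triv: "0 \<le> t \<Longrightarrow> Dle t 2"
  unfolding Dle_def
proof
  fix x assume t: "0 \<le> t" and x: "x \<in> Om"
  have "(\<Sum>y\<in>Om. \<bar>P t x y - nu y\<bar>) \<le> (\<Sum>y\<in>Om. P t x y + nu y)"
  proof (intro sum_mono)
    fix y assume y: "y \<in> Om"
    have "0 \<le> P t x y" "0 \<le> nu y" using P_nonneg[OF x t] nu_nonneg[OF y] by auto
    then show "\<bar>P t x y - nu y\<bar> \<le> P t x y + nu y" by (simp add: abs_le_iff)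
  qed
  also have "\<dots> = 2" using P_rowsum[OF x] nu_sum by (simp add: sum.distrib)
  finally show "(\<Sum>y\<in>Om. \<bar>P t x y - nu y\<bar>) \<le> 2" .
qed

lemma tv_iff: "(\<forall>x\<in>Om. tv_dist Om (P t x) nu \<le> 1 / 4) \<longleftrightarrow> Dle t (1/2)"
  by (simp add: Dle_def tv_dist_def field_simps)

lemma pos_path:
  "(x, y) \<in> (jump_rel Om R) ^^ j \<Longrightarrow> x \<in> Om \<Longrightarrow> 0 < mpow Om (shiftm Q cc) j x y"
proof (induction j arbitrary: x)
  case 0 then show ?case by simp
next
  case (Suc j)
  obtain w where w: "(x, w) \<in> jump_rel Om R" "(w, y) \<in> (jump_rel Om R) ^^ j"
    using relpow_Suc_D2[OF Suc.prems(1)] by blast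
  have wO: "w \<in> Om" and xw: "x \<noteq> w" and Rp: "0 < R x w" using w(1) by (auto simp: jump_rel_def)
  have "shiftm Q cc x w * mpow Om (shiftm Q cc) j w y \<le> (\<Sum>z\<in>Om. shiftm Q cc x z * mpow Om (shiftm Q cc) j z y)"
    by (intro member_le_sum finO wO mult_nonneg_nonneg shift_nonneg[OF v] Suc.prems(2)
        mpow_nonneg[where S=Om]) auto
  moreover have "0 < shiftm Q cc x w" using Rp xw by (simp add: shiftm_def generator_def)
  then have "0 < shiftm Q cc x w * mpow Om (shiftm Q cc) j w y"
    using Suc.IH[OF w(2) wO] by (intro mult_pos_pos)
  ultimately show ?case by simp
qed

lemma pos_mono:
  "0 < mpow Om (shiftm Q cc) j x y \<Longrightarrow> x \<in> Om \<Longrightarrow> 0 < mpow Om (shiftm Q cc) (m + j) x y"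
proof (induction m)
  case 0 then show ?case by simp
next
  case (Suc m)
  have "shiftm Q cc x x * mpow Om (shiftm Q cc) (m + j) x y \<le> (\<Sum>z\<in>Om. shiftm Q cc x z * mpow Om (shiftm Q cc) (m + j) z y)"
    by (intro member_le_sum finO Suc.prems(2) mult_nonneg_nonneg shift_nonneg[OF v]
        mpow_nonneg[where S=Om]) auto
  moreover have "0 < shiftm Q cc x x"
    using exit_le_crate[OF v Suc.prems(2)] by (simp add: shiftm_def generator_def)
  then have "0 < shiftm Q cc x x * mpow Om (shiftm Q cc) (m + j) x y"
    using Suc by simp
  ultimately show ?case by simp
qed

lemma doeblin: "\<exists>\<delta>>0. \<forall>x\<in>Om. \<forall>y\<in>Om. \<delta> \<le> P 1 x y"
proof -
  let ?r = "jump_rel Om R"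
  let ?M = "mpow Om (shiftm Q cc)"
  have "\<forall>p\<in>Om \<times> Om. \<exists>j. p \<in> ?r ^^ j"
    using irr by (auto simp: irreducible_chain_def intro: rtrancl_imp_relpow)
  then obtain j where j: "\<And>p. p \<in> Om \<times> Om \<Longrightarrow> p \<in> ?r ^^ j p" by metis
  define K where "K = (\<Sum>p\<in>Om \<times> Om. j p)"
  have Kpos: "0 < ?M K x y" if "x \<in> Om" "y \<in> Om" for x y
  proof -
    have le: "j (x, y) \<le> K" unfolding K_def
      by (rule member_le_sum) (use that finO in auto)
    have "0 < ?M ((K - j (x, y)) + j (x, y)) x y"
      by (intro pos_mono pos_path j) (use that in auto)
    then show ?thesis using le by simp
  qed
  define V where "V = (\<lambda>(x, y). ?M K x y) ` (Om \<times> Om)"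
  have Vfin: "finite V" "V \<noteq> {}" using finO v by (auto simp: V_def valid_rates_def)
  have Vpos: "0 < Min V" using Vfin Kpos by (auto simp: V_def)
  define \<delta> where "\<delta> = exp (- cc) / fact K * Min V"
  have "0 < \<delta>" using Vpos by (simp add: \<delta>_def)
  moreover have "\<delta> \<le> P 1 x y" if x: "x \<in> Om" and y: "y \<in> Om" for x y
  proof -
    have "(\<Sum>k\<in>{K}. 1 ^ k / fact k * ?M k x y) \<le> mexp Om (shiftm Q cc) 1 x y"
      unfolding mexp_def
      by (intro sum_le_suminf mpow_summable'[OF finO x] mult_nonneg_nonneg divide_nonneg_pos
          mpow_nonneg[where S=Om] shift_nonneg[OF v] x) auto
    moreover have "?M K x y \<in> V" unfolding V_def using x y by (auto intro!: rev_image_eqI[of "(x,y)"])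
    then have "Min V \<le> ?M K x y" using Vfin(1) by (rule Min_le[rotated])
    moreover have "Min V / fact K \<le> ?M K x y / fact K"
      by (rule divide_right_mono) (use calculation in auto)
    ultimately have "Min V / fact K \<le> mexp Om (shiftm Q cc) 1 x y"
      by simp
    then have "exp (- cc) * (Min V / fact K) \<le> exp (- cc) * mexp Om (shiftm Q cc) 1 x y"
      by (intro mult_left_mono) auto
    then show ?thesis unfolding \<delta>_def mexp_gen_eq[OF finO x] by simp
  qed
  ultimately show ?thesis by blast
qed

lemma mixing_nonempty: "\<exists>T>0. Dle T (1/2)"
proof -
  obtain \<delta> where d: "0 < \<delta>" "\<And>x y. x \<in> Om \<Longrightarrow> y \<in> Om \<Longrightarrow> \<delta> \<le> P 1 x y" using doeblin by blast
  define \<rho> where "\<rho> = 1 - real (card Om) * \<delta>"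
  obtain x0 where x0: "x0 \<in> Om" using v by (auto simp: valid_rates_def)
  have cpos: "0 < card Om" using finO x0 card_gt_0_iff by blast
  have rho1: "\<rho> < 1" using cpos d by (simp add: \<rho>_def)
  have bnd: "(\<Sum>y\<in>Om. \<bar>P 1 z y - \<delta>\<bar>) \<le> \<rho>" if z: "z \<in> Om" for z
  proof -
    have "(\<Sum>y\<in>Om. \<bar>P 1 z y - \<delta>\<bar>) = (\<Sum>y\<in>Om. P 1 z y - \<delta>)"
      using d z by (intro sum.cong) auto
    also have "\<dots> = \<rho>" using P_rowsum[OF z] by (simp add: sum_subtractf \<rho>_def)
    finally show ?thesis by simp
  qed
  have "0 \<le> (\<Sum>y\<in>Om. \<bar>P 1 x0 y - \<delta>\<bar>)" by (simp add: sum_nonneg)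
  then have rho0: "0 \<le> \<rho>" using bnd[OF x0] by linarith
  have Dk: "Dle (real k) (2 * \<rho> ^ k)" for k
  proof (induction k)
    case 0 then show ?case using D_triv[of 0] by simp
  next
    case (Suc k)
    have "Dle (real k + 1) (2 * \<rho> ^ k * \<rho>)"
      unfolding Dle_def
      using Suc.IH by (auto simp: Dle_def intro!: D_step[where g="\<lambda>_. \<delta>"] bnd rho0)
    then show ?case by (simp add: algebra_simps)
  qed
  obtain k where k: "\<rho> ^ k < 1/4" using real_arch_pow_inv[OF _ rho1, of "1/4"] by auto
  have "\<rho> ^ Suc k \<le> \<rho> ^ k" using rho0 rho1 by (simp add: mult_left_le_one_le)
  then have "Dle (real (Suc k)) (1/2)"
    using Dk[of "Suc k"] k unfolding Dle_def by force
  then show ?thesis by (intro exI[of _ "real (Suc k)"]) auto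
qed

lemma survival_small: "\<exists>t>0. Sv t < exp (-1)"
proof -
  obtain \<delta> where d: "0 < \<delta>" "\<And>x y. x \<in> Om \<Longrightarrow> y \<in> Om \<Longrightarrow> \<delta> \<le> P 1 x y" using doeblin by blast
  obtain a where a: "a \<in> A" using Ane by auto
  have aO: "a \<in> Om" using a AO by auto
  have rs1: "rs 1 z \<le> 1 - \<delta>" if z: "z \<in> B" for z
  proof -
    have zO: "z \<in> Om" using z by auto
    have "rs 1 z \<le> (\<Sum>y\<in>B. P 1 z y)" unfolding rs_def by (intro sum_mono EB_le_P z) auto
    also have "\<dots> = 1 - (\<Sum>y\<in>A. P 1 z y)"
      using sum.subset_diff[OF AO finO, of "P 1 z"] P_rowsum[OF zO] by simp
    finally have 1: "rs 1 z \<le> 1 - (\<Sum>y\<in>A. P 1 z y)" .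
    have "P 1 z a \<le> (\<Sum>y\<in>A. P 1 z y)"
      by (rule member_le_sum) (use a finA AO P_nonneg[OF zO] in auto)
    then show ?thesis using d(2)[OF zO aO] 1 by simp
  qed
  have rsk: "rs (real k) x \<le> (1 - \<delta>) ^ k" if x: "x \<in> B" for k x
    using x
  proof (induction k arbitrary: x)
    case 0 then show ?case by (simp add: rs_zero)
  next
    case (Suc k)
    have "rs (real k + 1) x = (\<Sum>z\<in>B. EB (real k) x z * rs 1 z)" by (rule rs_add[OF Suc.prems])
    also have "\<dots> \<le> (\<Sum>z\<in>B. EB (real k) x z * (1 - \<delta>))"
      by (intro sum_mono mult_left_mono rs1 EB_nonneg Suc.prems) auto
    also have "\<dots> = rs (real k) x * (1 - \<delta>)" by (simp add: rs_def sum_distrib_right)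
    also have "\<dots> \<le> (1 - \<delta>) ^ k * (1 - \<delta>)"
    proof -
      have "0 \<le> 1 - \<delta>" using rs1[OF Suc.prems] rs_nonneg[where t=1, OF Suc.prems] by simp
      then show ?thesis using Suc.IH[OF Suc.prems] by (intro mult_right_mono)
    qed
    finally show ?case by (simp add: algebra_simps)
  qed
  have Svk: "Sv (real k) \<le> (1 - \<delta>) ^ k" for k
  proof -
    have "Sv (real k) \<le> (\<Sum>x\<in>B. nu x * (1 - \<delta>) ^ k)"
      unfolding Sv_def' by (intro sum_mono mult_left_mono rsk nu_nonneg) auto
    also have "\<dots> = (1 - \<delta>) ^ k * (\<Sum>x\<in>B. nu x)" by (simp add: sum_distrib_right mult_ac)
    also have "\<dots> \<le> (1 - \<delta>) ^ k"
      proof (rule mult_left_le)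
        show "(\<Sum>x\<in>B. nu x) \<le> 1" by (rule nuB_le1)
        have "\<delta> \<le> 1" using d(2)[OF aO aO] P_le1[where t=1 and x=a and y=a, OF aO _ aO] by simp
        then show "0 \<le> (1 - \<delta>) ^ k" by simp
      qed
    finally show ?thesis .
  qed
  have "\<delta> \<le> 1" using d(2)[OF aO aO] P_le1[where t=1 and x=a and y=a, OF aO _ aO] by simp
  obtain k where k: "(1 - \<delta>) ^ k < exp (-1)"
    using real_arch_pow_inv[of "exp (-1)" "1 - \<delta>"] d by auto
  have "(1 - \<delta>) ^ Suc k \<le> (1 - \<delta>) ^ k" using d \<open>\<delta> \<le> 1\<close> by (simp add: mult_left_le_one_le)
  then have "Sv (real (Suc k)) < exp (-1)" using Svk[of "Suc k"] k by linarith
  then show ?thesis by (intro exI[of _ "real (Suc k)"]) auto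
qed


lemma Dle_nonneg: "Dle t d \<Longrightarrow> 0 \<le> d"
proof -
  assume D: "Dle t d"
  obtain x0 where x0: "x0 \<in> Om" using v by (auto simp: valid_rates_def)
  have "0 \<le> (\<Sum>y\<in>Om. \<bar>P t x0 y - nu y\<bar>)" by (simp add: sum_nonneg)
  moreover have "(\<Sum>y\<in>Om. \<bar>P t x0 y - nu y\<bar>) \<le> d" using D x0 by (simp add: Dle_def)
  ultimately show ?thesis by linarith
qed

lemma nuA_nonneg: "0 \<le> (\<Sum>x\<in>A. nu x)"
  using AO by (auto intro!: sum_nonneg nu_nonneg)

lemma mult_approx:
  assumes U: "0 \<le> U" and D: "Dle U d" and a: "0 \<le> a" and b: "0 \<le> b"
  shows "\<bar>Sv (a + b) - Sv a * Sv b\<bar> \<le> d + U * flux + (\<Sum>x\<in>A. nu x)"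
proof -
  have d0: "0 \<le> d" by (rule Dle_nonneg[OF D])
  have fl: "0 \<le> flux" by (rule flux_nonneg)
  have nA: "0 \<le> (\<Sum>x\<in>A. nu x)" by (rule nuA_nonneg)
  have X0: "0 \<le> Sv a" "Sv a \<le> 1" using a Sv_nonneg Sv_le1 by auto
  show ?thesis
  proof (cases "U \<le> b")
    case True
    define r where "r = b - U"
    have r: "0 \<le> r" "b = U + r" using True by (auto simp: r_def)
    define g where "g w = rs r w" for w
    have g: "0 \<le> g w" "g w \<le> 1" if "w \<in> B" for w
      using rs_nonneg rs_le1 that r by (auto simp: g_def)
    have Svr: "Sv r = (\<Sum>w\<in>B. nu w * g w)" by (simp add: Sv_def' g_def)
    have hz: "rs (U + r) z = (\<Sum>w\<in>B. EB U z w * g w)" if "z \<in> B" for z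
      using rs_add[OF that] by (simp add: g_def)
    have PB: "\<bar>(\<Sum>w\<in>B. P U z w * g w) - Sv r\<bar> \<le> d" if z: "z \<in> B" for z
    proof -
      have zO: "z \<in> Om" using z by auto
      have "\<bar>(\<Sum>w\<in>B. P U z w * g w) - Sv r\<bar> = \<bar>\<Sum>w\<in>B. (P U z w - nu w) * g w\<bar>"
        by (simp add: Svr sum_subtractf left_diff_distrib)
      also have "\<dots> \<le> (\<Sum>w\<in>B. \<bar>P U z w - nu w\<bar>)"
        by (rule order_trans[OF sum_abs], intro sum_mono) (use g in \<open>auto simp: abs_mult intro: mult_left_le\<close>)
      also have "\<dots> \<le> (\<Sum>w\<in>Om. \<bar>P U z w - nu w\<bar>)" by (intro sum_mono2 finO) auto
      also have "\<dots> \<le> d" using D zO by (simp add: Dle_def)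
      finally show ?thesis .
    qed
    have up: "rs (U + r) z \<le> Sv r + d" if z: "z \<in> B" for z
    proof -
      have "rs (U + r) z \<le> (\<Sum>w\<in>B. P U z w * g w)"
        unfolding hz[OF z] by (intro sum_mono mult_right_mono EB_le_P z U g) auto
      then show ?thesis using PB[OF z] by linarith
    qed
    have low: "Sv r - d - (1 - rs U z) \<le> rs (U + r) z" if z: "z \<in> B" for z
    proof -
      have zO: "z \<in> Om" using z by auto
      have "(\<Sum>w\<in>B. P U z w * g w) - rs (U + r) z = (\<Sum>w\<in>B. (P U z w - EB U z w) * g w)"
        unfolding hz[OF z] by (simp add: sum_subtractf left_diff_distrib)
      also have "\<dots> \<le> (\<Sum>w\<in>B. (P U z w - EB U z w))"
        by (intro sum_mono mult_right_le_one_le) (use g EB_le_P[OF z U] in auto)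
      also have "\<dots> = (\<Sum>w\<in>B. P U z w) - rs U z" by (simp add: rs_def sum_subtractf)
      also have "(\<Sum>w\<in>B. P U z w) \<le> (\<Sum>w\<in>Om. P U z w)"
        by (intro sum_mono2 finO) (auto intro: P_nonneg[OF zO U])
      finally have "(\<Sum>w\<in>B. P U z w * g w) - rs (U + r) z \<le> 1 - rs U z"
        using P_rowsum[OF zO] by simp
      then show ?thesis using PB[OF z] by linarith
    qed
    have S_ab: "Sv (a + b) = (\<Sum>z\<in>B. mu a z * rs (U + r) z)" using Sv_mu_add[of a "U + r"] r by simp
    have upper: "Sv (a + b) \<le> Sv a * (Sv r + d)"
    proof -
      have "Sv (a + b) \<le> (\<Sum>z\<in>B. mu a z * (Sv r + d))"
        unfolding S_ab by (intro sum_mono mult_left_mono up mu_nonneg a) auto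
      also have "\<dots> = Sv a * (Sv r + d)" by (simp add: Sv_mu sum_distrib_right)
      finally show ?thesis .
    qed
    have lower: "Sv a * (Sv r - d) - U * flux \<le> Sv (a + b)"
    proof -
      have "(\<Sum>z\<in>B. mu a z * (Sv r - d - (1 - rs U z))) \<le> Sv (a + b)"
        unfolding S_ab by (intro sum_mono mult_left_mono low mu_nonneg a) auto
      moreover have "(\<Sum>z\<in>B. mu a z * (Sv r - d - (1 - rs U z))) = (\<Sum>z\<in>B. mu a z) * (Sv r - d) - (\<Sum>z\<in>B. mu a z * (1 - rs U z))"
        by (simp add: right_diff_distrib sum_subtractf sum_distrib_right)
      then have "(\<Sum>z\<in>B. mu a z * (Sv r - d - (1 - rs U z))) = Sv a * (Sv r - d) - (Sv a - Sv (a + U))"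
        by (simp only: Sv_mu[of a, symmetric] Sv_diff[of a U, symmetric])
      moreover have "Sv a - Sv (a + U) \<le> U * flux" using Sv_lip[OF a U] .
      ultimately show ?thesis by linarith
    qed
    have rleb: "r \<le> b" using U r by simp
    have bmr: "b - r = U" using r by simp
    have rb: "Sv b \<le> Sv r" "Sv r - Sv b \<le> U * flux"
      using Sv_mono[OF r(1) rleb] Sv_lip'[OF r(1) rleb] unfolding bmr by auto
    have m1: "Sv a * (Sv r - Sv b) \<le> U * flux"
      using rb X0 by (metis diff_ge_0_iff_ge mult_left_le_one_le order_trans)
    have m2: "0 \<le> Sv a * (Sv r - Sv b)" using rb X0 by simp
    have m3: "Sv a * d \<le> d" "0 \<le> Sv a * d" using X0 d0 by (auto simp: mult_left_le_one_le)
    have "Sv (a + b) - Sv a * Sv b \<le> d + U * flux"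
      using upper m1 m3 by (simp add: algebra_simps)
    moreover have "Sv a * Sv b - Sv (a + b) \<le> d + U * flux"
      using lower m2 m3 by (simp add: algebra_simps)
    ultimately show ?thesis using nA by (simp add: abs_le_iff)
  next
    case False
    then have bU: "b \<le> U" by simp
    have Y: "0 \<le> Sv b" "Sv b \<le> 1" using b Sv_nonneg Sv_le1 by auto
    have 1: "Sv (a + b) \<le> Sv a" using Sv_mono_step[OF a b] .
    have 2: "Sv a - Sv (a + b) \<le> b * flux" using Sv_lip[OF a b] .
    have 3: "Sv 0 - Sv b \<le> b * flux" using Sv_lip[of 0 b] b by simp
    have bf: "b * flux \<le> U * flux" using bU fl by (simp add: mult_right_mono)
    have 4: "Sv a * Sv b \<le> Sv a" using X0 Y by (simp add: mult_left_le)
    have 5: "Sv a * (1 - Sv b) \<le> 1 - Sv b" using X0 Y by (simp add: mult_left_le_one_le)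
    have "Sv a - Sv a * Sv b \<le> (\<Sum>x\<in>A. nu x) + U * flux"
      using 5 3 bf Sv_zero by (simp add: algebra_simps)
    then show ?thesis using 1 2 4 bf d0 nA fl by (simp add: abs_le_iff)
  qed
qed

lemma flux_le_cap: "flux \<le> cap_rate Om R nu A" "0 \<le> cap_rate Om R nu A"
proof -
  have den: "0 \<le> (\<Sum>x\<in>B. nu x)" by (auto intro!: sum_nonneg nu_nonneg)
  have eq: "cap_rate Om R nu A = flux / (\<Sum>x\<in>B. nu x)" by (simp add: cap_rate_def flux_def)
  have "flux \<le> cap_rate Om R nu A \<and> 0 \<le> cap_rate Om R nu A"
  proof (cases "(\<Sum>x\<in>B. nu x) = 0")
    case True
    then have "\<forall>x\<in>B. nu x = 0" using sum_nonneg_eq_0_iff[OF finB] nu_nonneg by auto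
    then have "flux = 0" by (simp add: flux_def)
    then show ?thesis using eq by simp
  next
    case False
    then have dp: "0 < (\<Sum>x\<in>B. nu x)" using den by simp
    have "flux * 1 \<le> flux / (\<Sum>x\<in>B. nu x)"
      using dp nuB_le1 flux_nonneg by (simp add: le_divide_eq mult_left_le)
    then show ?thesis using eq flux_nonneg dp by simp
  qed
  then show "flux \<le> cap_rate Om R nu A" "0 \<le> cap_rate Om R nu A" by auto
qed

lemma exp_m1: "exp (-1::real) \<le> 1/2"
proof -
  have "2 \<le> exp (1::real)" using exp_ge_add_one_self[of 1] by simp
  then show ?thesis by (simp add: exp_minus field_simps)
qed

lemma theta_props:
  assumes small: "(\<Sum>x\<in>A. nu x) < 1/2"
  shows "0 \<le> theta Om R nu A" "Sv (theta Om R nu A) = exp (-1)"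
proof -
  define Z where "Z = {t. 0 < t \<and> Sv t < exp (-1)}"
  define Th where "Th = theta Om R nu A"
  have Th: "Th = Inf Z" by (simp add: Th_def theta_def Z_def)
  have Zne: "Z \<noteq> {}" using survival_small by (auto simp: Z_def)
  have Zbdd: "bdd_below Z" by (auto simp: Z_def bdd_below_def intro!: exI[of _ 0])
  have Th0: "0 \<le> Th" unfolding Th by (rule cInf_greatest[OF Zne]) (auto simp: Z_def)
  have fl: "0 \<le> flux" by (rule flux_nonneg)
  have S0: "1/2 < Sv 0" using small Sv_zero by simp
  have le: "Sv Th \<le> exp (-1)"
  proof (rule field_le_epsilon)
    fix e :: real assume e: "0 < e"
    define \<epsilon> where "\<epsilon> = e / (flux + 1)"
    have eps: "0 < \<epsilon>" "\<epsilon> * flux \<le> e" using e fl by (auto simp: \<epsilon>_def field_simps)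
    obtain t where t: "t \<in> Z" "t < Th + \<epsilon>"
      using cInf_less_iff[OF Zne Zbdd, of "Th + \<epsilon>"] eps Th by auto
    have "Th \<le> t" unfolding Th by (rule cInf_lower[OF t(1) Zbdd])
    then have "Sv Th - Sv t \<le> (t - Th) * flux" using Sv_lip' Th0 by blast
    also have "\<dots> \<le> \<epsilon> * flux" using t fl by (intro mult_right_mono) auto
    finally show "Sv Th \<le> exp (-1) + e" using t(1) eps by (simp add: Z_def)
  qed
  have ge: "exp (-1) \<le> Sv Th"
  proof (cases "Th = 0")
    case True then show ?thesis using S0 exp_m1 by simp
  next
    case False
    then have Thp: "0 < Th" using Th0 by simp
    show ?thesis
    proof (rule field_le_epsilon)
      fix e :: real assume e: "0 < e"
      define \<epsilon> where "\<epsilon> = min (Th / 2) (e / (flux + 1))"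
      have eps: "0 < \<epsilon>" "\<epsilon> < Th" "\<epsilon> * flux \<le> e"
      proof -
        show "0 < \<epsilon>" "\<epsilon> < Th" using e fl Thp by (auto simp: \<epsilon>_def)
        have "\<epsilon> * flux \<le> e / (flux + 1) * flux" using fl by (intro mult_right_mono) (auto simp: \<epsilon>_def)
        also have "\<dots> \<le> e" using e fl by (simp add: field_simps)
        finally show "\<epsilon> * flux \<le> e" .
      qed
      define t where "t = Th - \<epsilon>"
      have t: "0 < t" "t < Th" using eps by (auto simp: t_def)
      have "t \<notin> Z"
      proof
        assume "t \<in> Z" then have "Th \<le> t" unfolding Th by (rule cInf_lower[OF _ Zbdd])
        with t show False by simp
      qed
      then have "exp (-1) \<le> Sv t" using t by (auto simp: Z_def)
      moreover have "Sv t - Sv Th \<le> (Th - t) * flux" using Sv_lip' t by auto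
      moreover have "(Th - t) * flux \<le> e" using eps by (simp add: t_def)
      ultimately show "exp (-1) \<le> Sv Th + e" by linarith
    qed
  qed
  show "0 \<le> theta Om R nu A" using Th0 by (simp add: Th_def)
  show "Sv (theta Om R nu A) = exp (-1)" using le ge by (simp add: Th_def)
qed


lemma mult_final:
  assumes e: "0 < \<epsilon>" and K: "(1/2) ^ K \<le> \<epsilon> / 3" and K1: "0 < K"
    and mx: "mixing_time Om R nu * cap_rate Om R nu A < \<epsilon> / (6 * real K)"
    and nA: "(\<Sum>x\<in>A. nu x) < \<epsilon> / 3" and c: "0 \<le> c"
  shows "\<forall>a\<ge>0. \<forall>b\<ge>0. \<bar>Sv ((a + b) * c) - Sv (a * c) * Sv (b * c)\<bar> \<le> \<epsilon>"
proof (intro allI impI)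
  fix a b :: real assume a: "0 \<le> a" and b: "0 \<le> b"
  define Z where "Z = {t. 0 < t \<and> (\<forall>x\<in>Om. tv_dist Om (P t x) nu \<le> 1 / 4)}"
  have mt: "mixing_time Om R nu = Inf Z" by (simp add: mixing_time_def trans_prob_def Z_def)
  have Zne: "Z \<noteq> {}" using mixing_nonempty tv_iff by (auto simp: Z_def)
  have Zbdd: "bdd_below Z" by (auto simp: Z_def bdd_below_def intro!: exI[of _ 0])
  define r where "r = cap_rate Om R nu A"
  have r0: "0 \<le> r" using flux_le_cap(2) by (simp add: r_def)
  define m where "m = Inf Z"
  have Kr: "0 < real K" using K1 by simp
  define \<delta> where "\<delta> = \<epsilon> / (6 * real K * (r + 1))"
  have \<delta>: "0 < \<delta>" using e Kr r0 by (simp add: \<delta>_def)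
  obtain T where T: "T \<in> Z" "T < m + \<delta>"
    using cInf_less_iff[OF Zne Zbdd, of "m + \<delta>"] \<delta> by (auto simp: m_def)
  have T0: "0 < T" and DT: "Dle T (1/2)" using T(1) tv_iff by (auto simp: Z_def)
  obtain k where k: "K = Suc k" using K1 gr0_conv_Suc by auto
  define U where "U = real K * T"
  have U0: "0 \<le> U" using T0 by (simp add: U_def)
  have DU: "Dle U ((1/2) ^ K)" using D_pow[OF DT, of k] by (simp add: U_def k)
  have "U * flux \<le> U * r" using flux_le_cap(1) U0 by (simp add: r_def mult_left_mono)
  also have "\<dots> = real K * (T * r)" by (simp add: U_def)
  also have "\<dots> \<le> real K * ((m + \<delta>) * r)"
    using T(2) r0 Kr by (intro mult_left_mono mult_right_mono) auto
  also have "\<dots> = real K * (m * r) + real K * \<delta> * r" by (simp add: algebra_simps)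
  also have "real K * (m * r) \<le> \<epsilon> / 6"
  proof -
    have "m * r < \<epsilon> / (6 * real K)" using mx by (simp add: mt m_def r_def)
    then have "real K * (m * r) < real K * (\<epsilon> / (6 * real K))" by (rule mult_strict_left_mono[OF _ Kr])
    also have "\<dots> = \<epsilon> / 6" using Kr by simp
    finally show ?thesis by simp
  qed
  also have "real K * \<delta> * r \<le> \<epsilon> / 6"
  proof -
    have r1: "r + 1 \<noteq> 0" "real K \<noteq> 0" using r0 Kr by auto
    have "real K * \<delta> * r = \<epsilon> / 6 * (r / (r + 1))" using r1 by (simp add: \<delta>_def)
    also have "\<dots> \<le> \<epsilon> / 6 * 1" using e r0 by (intro mult_left_mono) auto
    finally show ?thesis by simp
  qed
  finally have Uf: "U * flux \<le> \<epsilon> / 6 + \<epsilon> / 6" by simp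
  have "\<bar>Sv (a * c + b * c) - Sv (a * c) * Sv (b * c)\<bar> \<le> (1/2) ^ K + U * flux + (\<Sum>x\<in>A. nu x)"
    using a b c by (intro mult_approx[OF U0 DU]) auto
  also have "\<dots> \<le> \<epsilon>" using K Uf nA by linarith
  finally show "\<bar>Sv ((a + b) * c) - Sv (a * c) * Sv (b * c)\<bar> \<le> \<epsilon>" by (simp add: distrib_right)
qed

end




lemma pow_approx:
  fixes G :: "real \<Rightarrow> real"
  assumes mult: "\<And>a b. 0 \<le> a \<Longrightarrow> 0 \<le> b \<Longrightarrow> \<bar>G (a + b) - G a * G b\<bar> \<le> e"
    and bnd: "\<And>a. 0 \<le> a \<Longrightarrow> 0 \<le> G a \<and> G a \<le> 1"
    and x: "0 \<le> x"
  shows "\<bar>G (real (Suc m) * x) - G x ^ Suc m\<bar> \<le> real m * e"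
proof (induction m)
  case 0 then show ?case by simp
next
  case (Suc m)
  have 1: "\<bar>G (real (Suc m) * x + x) - G (real (Suc m) * x) * G x\<bar> \<le> e"
    using x by (intro mult) auto
  have "\<bar>G (real (Suc m) * x) * G x - G x ^ Suc (Suc m)\<bar> = G x * \<bar>G (real (Suc m) * x) - G x ^ Suc m\<bar>"
  proof -
    have "G (real (Suc m) * x) * G x - G x ^ Suc (Suc m) = G x * (G (real (Suc m) * x) - G x ^ Suc m)"
      by (simp add: algebra_simps)
    then show ?thesis using bnd[OF x] by (simp add: abs_mult)
  qed
  also have "\<dots> \<le> 1 * (real m * e)"
    using bnd[OF x] Suc.IH by (intro mult_mono) auto
  finally have 2: "\<bar>G (real (Suc m) * x) * G x - G x ^ Suc (Suc m)\<bar> \<le> real m * e" by simp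
  have eq: "real (Suc (Suc m)) * x = real (Suc m) * x + x" by (simp add: algebra_simps)
  show ?case unfolding eq using 1 2 by (simp add: abs_le_iff algebra_simps)
qed

lemma exp_lip: "0 \<le> x \<Longrightarrow> x \<le> y \<Longrightarrow> exp (- x) - exp (- y) \<le> y - (x::real)"
proof -
  assume x: "0 \<le> x" and xy: "x \<le> y"
  have "exp (- x) * exp (x - y) = exp (- y)" by (simp add: exp_add[symmetric])
  then have 1: "exp (- x) - exp (- y) = exp (- x) * (1 - exp (x - y))" by (simp add: algebra_simps)
  have 2: "1 - exp (x - y) \<le> y - x" using exp_ge_add_one_self[of "x - y"] by linarith
  have 3: "0 \<le> 1 - exp (x - y)" using xy by simp
  have 4: "exp (- x) \<le> 1" using x by simp
  have "exp (- x) * (1 - exp (x - y)) \<le> 1 - exp (x - y)"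
    using 3 4 by (intro mult_left_le_one_le) auto
  then show ?thesis using 1 2 by linarith
qed

lemma abstract_exp:
  fixes G :: "nat \<Rightarrow> real \<Rightarrow> real"
  assumes one: "eventually (\<lambda>N. G N 1 = exp (-1)) sequentially"
    and bnd: "eventually (\<lambda>N. \<forall>a\<ge>0. 0 \<le> G N a \<and> G N a \<le> 1) sequentially"
    and mono: "eventually (\<lambda>N. \<forall>a b. 0 \<le> a \<longrightarrow> a \<le> b \<longrightarrow> G N b \<le> G N a) sequentially"
    and mult: "\<And>\<epsilon>. 0 < \<epsilon> \<Longrightarrow> eventually (\<lambda>N. \<forall>a\<ge>0. \<forall>b\<ge>0. \<bar>G N (a + b) - G N a * G N b\<bar> \<le> \<epsilon>) sequentially"
    and t: "0 \<le> t"
  shows "(\<lambda>N. G N t) \<longlonglongrightarrow> exp (- t)"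
proof -
  have stepA: "(\<lambda>N. G N (real (Suc m) * x) - G N x ^ Suc m) \<longlonglongrightarrow> 0" if x: "0 \<le> x" for m x
  proof (rule tendstoI)
    fix e :: real assume e: "0 < e"
    have "eventually (\<lambda>N. \<forall>a\<ge>0. \<forall>b\<ge>0. \<bar>G N (a + b) - G N a * G N b\<bar> \<le> e / (real m + 1)) sequentially"
      using e by (intro mult) simp
    then show "eventually (\<lambda>N. dist (G N (real (Suc m) * x) - G N x ^ Suc m) 0 < e) sequentially"
      using bnd
    proof eventually_elim
      case (elim N)
      have "\<bar>G N (real (Suc m) * x) - G N x ^ Suc m\<bar> \<le> real m * (e / (real m + 1))"
        by (rule pow_approx) (use elim x in auto)
      also have "\<dots> < e" using e by (simp add: field_simps)
      finally show ?case by (simp add: dist_real_def)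
    qed
  qed
  have G0: "(\<lambda>N. G N 0) \<longlonglongrightarrow> 1"
  proof -
    have a: "(\<lambda>N. G N (1 + 0) - G N 1 * G N 0) \<longlonglongrightarrow> 0"
    proof (rule tendstoI)
      fix e :: real assume e: "0 < e"
      have "eventually (\<lambda>N. \<forall>a\<ge>0. \<forall>b\<ge>0. \<bar>G N (a + b) - G N a * G N b\<bar> \<le> e / 2) sequentially"
        using e by (intro mult) simp
      then show "eventually (\<lambda>N. dist (G N (1 + 0) - G N 1 * G N 0) 0 < e) sequentially"
      proof eventually_elim
        case (elim N)
        have "\<bar>G N (1 + 0) - G N 1 * G N 0\<bar> \<le> e / 2" using elim[rule_format, of 1 0] by simp
        then show ?case using e by (simp add: dist_real_def)
      qed
    qed
    have "eventually (\<lambda>N. 1 - (G N (1 + 0) - G N 1 * G N 0) / exp (-1) = G N 0) sequentially"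
      using one by eventually_elim (simp add: field_simps)
    moreover have "(\<lambda>N. 1 - (G N (1 + 0) - G N 1 * G N 0) / exp (-1)) \<longlonglongrightarrow> 1 - 0 / exp (-1)"
      by (intro tendsto_intros a) simp
    ultimately show ?thesis by (simp add: Lim_transform_eventually)
  qed
  have stepC: "(\<lambda>N. G N (1 / real (Suc m))) \<longlonglongrightarrow> exp (- (1 / real (Suc m)))" for m
  proof -
    define q where "q = Suc m"
    have q: "0 < q" by (simp add: q_def)
    have "(\<lambda>N. G N (real q * (1 / real q)) - G N (1 / real q) ^ q) \<longlonglongrightarrow> 0"
      unfolding q_def by (rule stepA) simp
    then have d: "(\<lambda>N. G N 1 - G N (1 / real q) ^ q) \<longlonglongrightarrow> 0" using q by simp
    have "eventually (\<lambda>N. exp (-1) - (G N 1 - G N (1 / real q) ^ q) = G N (1 / real q) ^ q) sequentially"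
      using one by eventually_elim simp
    moreover have "(\<lambda>N. exp (-1) - (G N 1 - G N (1 / real q) ^ q)) \<longlonglongrightarrow> exp (-1) - 0"
      by (intro tendsto_intros d)
    ultimately have pq: "(\<lambda>N. G N (1 / real q) ^ q) \<longlonglongrightarrow> exp (-1)"
      by (simp add: Lim_transform_eventually)
    have "eventually (\<lambda>N. root q (G N (1 / real q) ^ q) = G N (1 / real q)) sequentially"
      using bnd
    proof eventually_elim
      case (elim N)
      have "0 \<le> G N (1 / real q)" using elim[rule_format, of "1 / real q"] by simp
      then show ?case by (rule real_root_power_cancel[OF q])
    qed
    moreover have "(\<lambda>N. root q (G N (1 / real q) ^ q)) \<longlonglongrightarrow> root q (exp (-1))"
      by (intro tendsto_real_root pq)
    moreover have "root q (exp (-1)) = exp (- (1 / real q))"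
      using q by (simp add: root_powr_inverse exp_powr_real)
    ultimately show ?thesis unfolding q_def by (simp add: Lim_transform_eventually)
  qed
  have stepD: "(\<lambda>N. G N (real p / real (Suc m))) \<longlonglongrightarrow> exp (- (real p / real (Suc m)))" for p m
  proof (cases p)
    case 0 then show ?thesis using G0 by simp
  next
    case (Suc k)
    have "(\<lambda>N. G N (real (Suc k) * (1 / real (Suc m))) - G N (1 / real (Suc m)) ^ Suc k) \<longlonglongrightarrow> 0"
      by (rule stepA) simp
    moreover have "(\<lambda>N. G N (1 / real (Suc m)) ^ Suc k) \<longlonglongrightarrow> exp (- (1 / real (Suc m))) ^ Suc k"
      by (intro tendsto_intros stepC)
    ultimately have "(\<lambda>N. (G N (real (Suc k) * (1 / real (Suc m))) - G N (1 / real (Suc m)) ^ Suc k)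
        + G N (1 / real (Suc m)) ^ Suc k) \<longlonglongrightarrow> 0 + exp (- (1 / real (Suc m))) ^ Suc k"
      by (rule tendsto_add)
    moreover have "exp (- (1 / real (Suc m))) ^ Suc k = exp (- (real (Suc k) / real (Suc m)))"
    proof -
      have "exp (- (1 / real (Suc m))) ^ Suc k = exp (real (Suc k) * (- (1 / real (Suc m))))"
        by (rule exp_of_nat_mult[symmetric])
      also have "\<dots> = exp (- (real (Suc k) / real (Suc m)))" by simp
      finally show ?thesis .
    qed
    ultimately show ?thesis using Suc by simp
  qed
  show ?thesis
  proof (rule tendstoI)
    fix e :: real assume e: "0 < e"
    obtain m :: nat where m: "2 / e < real m" using reals_Archimedean2 by blast
    define q where "q = Suc m"
    have q: "0 < real q" "1 / real q < e / 2"
    proof -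
      show "0 < real q" by (simp add: q_def)
      have qp: "0 < real q" by (simp add: q_def)
      have "2 / e < real q" using m by (simp add: q_def)
      then have "2 < real q * e" using e by (simp add: divide_less_eq)
      then show "1 / real q < e / 2" using e qp by (simp add: field_simps)
    qed
    define p where "p = nat \<lfloor>t * real q\<rfloor>"
    have p1: "real p \<le> t * real q" using t q by (simp add: p_def)
    have p2: "t * real q < real p + 1" using t q by (simp add: p_def)
    have lo: "real p / real q \<le> t" using p1 q by (simp add: field_simps)
    have hi: "t \<le> real (Suc p) / real q" using p2 q by (simp add: field_simps)
    have gap: "real (Suc p) / real q - real p / real q = 1 / real q" by (simp add: diff_divide_distrib[symmetric])
    have e1: "exp (- (real p / real q)) \<le> exp (- t) + 1 / real q"
      using exp_lip[of "real p / real q" t] lo gap hi by simp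
    have e2: "exp (- t) - 1 / real q \<le> exp (- (real (Suc p) / real q))"
      using exp_lip[of t "real (Suc p) / real q"] lo gap hi t by simp
    have ev1: "eventually (\<lambda>N. dist (G N (real p / real q)) (exp (- (real p / real q))) < e / 2) sequentially"
      using stepD[of p m] e unfolding q_def by (intro tendstoD) auto
    have ev2: "eventually (\<lambda>N. dist (G N (real (Suc p) / real q)) (exp (- (real (Suc p) / real q))) < e / 2) sequentially"
      using stepD[of "Suc p" m] e unfolding q_def by (intro tendstoD) auto
    have nn: "0 \<le> real p / real q" using q by simp
    show "eventually (\<lambda>N. dist (G N t) (exp (- t)) < e) sequentially"
      using ev1 ev2 mono
    proof eventually_elim
      case (elim N)
      have m1: "G N t \<le> G N (real p / real q)" using elim(3) nn lo by blast
      have m2: "G N (real (Suc p) / real q) \<le> G N t" using elim(3) t hi by blast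
      show ?case using elim(1,2) m1 m2 e1 e2 q(2) unfolding dist_real_def abs_less_iff by linarith
    qed
  qed
qed



theorem lemma3p4:
  fixes Om :: "nat \<Rightarrow> 'a set" and R :: "nat \<Rightarrow> 'a \<Rightarrow> 'a \<Rightarrow> real"
    and nu :: "nat \<Rightarrow> 'a \<Rightarrow> real" and A :: "nat \<Rightarrow> 'a set"
  assumes rates: "\<And>N. N \<ge> 1 \<Longrightarrow> valid_rates (Om N) (R N)"
    and irred: "\<And>N. N \<ge> 1 \<Longrightarrow> irreducible_chain (Om N) (R N)"
    and stat: "\<And>N. N \<ge> 1 \<Longrightarrow> stationary (Om N) (R N) (nu N)"
    and A_sub: "\<And>N. N \<ge> 1 \<Longrightarrow> A N \<subseteq> Om N"
    and A_ne: "\<And>N. N \<ge> 1 \<Longrightarrow> A N \<noteq> {}"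
    and nuA: "(\<lambda>N. \<Sum>x\<in>A N. nu N x) \<longlonglongrightarrow> 0"
    and mix: "(\<lambda>N. mixing_time (Om N) (R N) (nu N) * cap_rate (Om N) (R N) (nu N) (A N))
                \<longlonglongrightarrow> 0"
  shows "\<forall>t \<ge> 0. (\<lambda>N. survival (Om N) (R N) (nu N) (A N)
                       (t * theta (Om N) (R N) (nu N) (A N))) \<longlonglongrightarrow> exp (- t)"
proof (intro allI impI)
  fix t :: real assume t: "0 \<le> t"
  have M: "mc (Om N) (R N) (nu N) (A N)" if "N \<ge> 1" for N
    using that rates irred stat A_sub A_ne by (intro mc.intro) auto
  define G where "G N a = survival (Om N) (R N) (nu N) (A N) (a * theta (Om N) (R N) (nu N) (A N))" for N a
  have ev1: "eventually (\<lambda>N. N \<ge> 1) sequentially" by (rule eventually_ge_at_top)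
  have ev2: "eventually (\<lambda>N. (\<Sum>x\<in>A N. nu N x) < 1/2) sequentially"
    using order_tendstoD(2)[OF nuA, of "1/2"] by simp
  have good: "eventually (\<lambda>N. mc (Om N) (R N) (nu N) (A N) \<and> (\<Sum>x\<in>A N. nu N x) < 1/2) sequentially"
    using ev1 ev2 by eventually_elim (auto intro: M)
  have one: "eventually (\<lambda>N. G N 1 = exp (-1)) sequentially"
    using good by eventually_elim (auto simp: G_def dest: mc.theta_props(2))
  have bnd: "eventually (\<lambda>N. \<forall>a\<ge>0. 0 \<le> G N a \<and> G N a \<le> 1) sequentially"
    using good
  proof eventually_elim
    case (elim N)
    have th: "0 \<le> theta (Om N) (R N) (nu N) (A N)" using mc.theta_props(1) elim by blast
    show ?case unfolding G_def using elim th
      by (auto intro!: mc.Sv_nonneg mc.Sv_le1 mult_nonneg_nonneg)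
  qed
  have mono: "eventually (\<lambda>N. \<forall>a b. 0 \<le> a \<longrightarrow> a \<le> b \<longrightarrow> G N b \<le> G N a) sequentially"
    using good
  proof eventually_elim
    case (elim N)
    have th: "0 \<le> theta (Om N) (R N) (nu N) (A N)" using mc.theta_props(1) elim by blast
    show ?case unfolding G_def using elim th
      by (auto intro!: mc.Sv_mono mult_nonneg_nonneg mult_right_mono)
  qed
  have mult: "eventually (\<lambda>N. \<forall>a\<ge>0. \<forall>b\<ge>0. \<bar>G N (a + b) - G N a * G N b\<bar> \<le> \<epsilon>) sequentially"
    if e: "0 < \<epsilon>" for \<epsilon>
  proof -
    obtain k where k: "(1/2::real) ^ k < \<epsilon> / 3" using real_arch_pow_inv[of "\<epsilon> / 3" "1/2"] e by auto
    define K where "K = Suc k"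
    have K: "(1/2::real) ^ K \<le> \<epsilon> / 3" "0 < K"
    proof -
      have "(1/2::real) ^ K \<le> (1/2) ^ k" by (rule power_decreasing) (auto simp: K_def)
      then show "(1/2::real) ^ K \<le> \<epsilon> / 3" using k by linarith
      show "0 < K" by (simp add: K_def)
    qed
    have e6: "0 < \<epsilon> / (6 * real K)" using e K by simp
    have ev3: "eventually (\<lambda>N. mixing_time (Om N) (R N) (nu N) * cap_rate (Om N) (R N) (nu N) (A N) < \<epsilon> / (6 * real K)) sequentially"
      using order_tendstoD(2)[OF mix e6] by simp
    have ev4: "eventually (\<lambda>N. (\<Sum>x\<in>A N. nu N x) < \<epsilon> / 3) sequentially"
      using order_tendstoD(2)[OF nuA, of "\<epsilon> / 3"] e by simp
    show ?thesis using good ev3 ev4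
    proof eventually_elim
      case (elim N)
      have th: "0 \<le> theta (Om N) (R N) (nu N) (A N)" using mc.theta_props(1) elim by blast
      show ?case unfolding G_def
        by (rule mc.mult_final[OF _ e K(1) K(2) _ _ th]) (use elim in auto)
    qed
  qed
  have "(\<lambda>N. G N t) \<longlonglongrightarrow> exp (- t)"
    by (rule abstract_exp[OF one bnd mono mult t])
  then show "(\<lambda>N. survival (Om N) (R N) (nu N) (A N) (t * theta (Om N) (R N) (nu N) (A N))) \<longlonglongrightarrow> exp (- t)"
    by (simp add: G_def)
qed

end
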